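(* The product $*$ on $K[\mathcal{T}_\infty]$ is associative, with unit the one-node tree $\odot$; hence $(K[\mathcal{T}_\infty],* )$ is a (unital associative) algebra.
   Context: $K$ is a field. A tree is a finite planar rooted tree; its degree is the number of non-root nodes; $\odot$ is the one-node tree; $\mathcal{T}_\infty$ is the set of all trees and $K[\mathcal{T}_\infty]$ the $K$-vector space with basis $\mathcal{T}_\infty$. Nodes $N(t)$ of a tree are ordered by depth-first post-order (at each node traverse subtrees left to right recursively, then the node; root maximal); write $u_1<\dots<u_n$ for the non-root nodes. For a set $A$ of non-root nodes, $t_A$ is obtained by deleting the non-root nodes outside $A$ (children of a deleted node attached in order to its parent in its place); $t_{[i,j]}=t_{\{u_h,\dots,u_k\}}$ if $i\le j$ and $[i,j]\cap[n]=[h,k]\ne\emptyset$, else $\odot$. A partition of a tree $u$ of degree $n\ge1$ is an ordered tuple $(u_{[n_0+1,n_1]},\dots,u_{[n_{k-1}+1,n_k]})$ with $0=n_0<\dots<n_k=n$; $\mathcal{P}(u)$ is the set of partitions. For $P=(u_1,\dots,u_k)$, $I(P,t)$ is the set of maps $f$ from blocks to $N(t)$ with $f(u_1)<\dots<f(u_k)$. The hash product $t\#_{P,f}u$ is obtained from $t$ by identifying the root of each $u_i$ with $f(u_i)$, the children of the root of $u_i$ becoming children of $f(u_i)$ placed to the right of its original children. The product $*$ is the bilinear extension of $t* u=\sum_{P\in\mathcal{P}(u)}\sum_{f\in I(P,t)}t\#_{P,f}u$ for $|u|\ge1$ and $t*\odot=t$. *)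

theory Defs
  imports Main "HOL-Library.Poly_Mapping"
begin

datatype tree = Node "tree list"

fun children :: "tree \<Rightarrow> tree list" where
  "children (Node ts) = ts"

definition odot :: tree where
  "odot = Node []"

lemma zip_size_termination [termination_simp]:
  "(a, b) \<in> set (zip xs ts) \<Longrightarrow> size b < Suc (size_list size ts)"
  by (metis set_zip_rightD less_Suc_eq_le size_list_estimation' order_refl)

fun nnodes :: "tree \<Rightarrow> nat" where
  "nnodes (Node ts) = Suc (sum_list (map nnodes ts))"

definition deg :: "tree \<Rightarrow> nat" where
  "deg t = nnodes t - 1"

text \<open>Nodes are addressed by paths (lists of child positions, 0-based).
  postorder t lists all nodes in depth-first post-order; the root [] is last.
  The i-th node (1-based), i.e. u_i, is node t i.\<close>
fun postorder :: "tree \<Rightarrow> nat list list" where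
  "postorder (Node ts) =
     concat (map (\<lambda>(i, c). map ((#) i) (postorder c)) (zip [0..<length ts] ts)) @ [[]]"

definition node :: "tree \<Rightarrow> nat \<Rightarrow> nat list" where
  "node t i = postorder t ! (i - 1)"

text \<open>Deleting all nodes whose path fails P (children of a deleted node are
  attached, in order, to its parent in its place). Returns the resulting forest.\<close>
fun rforest :: "(nat list \<Rightarrow> bool) \<Rightarrow> nat list \<Rightarrow> tree \<Rightarrow> tree list" where
  "rforest P p (Node ts) =
     (let cs = concat (map (\<lambda>(i, c). rforest P (p @ [i]) c) (zip [0..<length ts] ts))
      in if P p then [Node cs] else cs)"

text \<open>t_A, for A a set of indices of non-root nodes (subset of {1..deg t}).\<close>
definition restrict :: "tree \<Rightarrow> nat set \<Rightarrow> tree" where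
  "restrict t A =
     Node (concat (map (\<lambda>(i, c). rforest (\<lambda>q. q \<in> node t ` A) [i] c)
                        (zip [0..<length (children t)] (children t))))"

definition tint :: "tree \<Rightarrow> nat \<Rightarrow> nat \<Rightarrow> tree" where
  "tint t i j = (if i \<le> j \<and> {i..j} \<inter> {1..deg t} \<noteq> {}
                 then restrict t ({i..j} \<inter> {1..deg t}) else odot)"

text \<open>A partition of a tree of degree n is encoded by its cut list
  [n_1, ..., n_k] with 0 = n_0 < n_1 < ... < n_k = n.\<close>
definition cuts :: "nat \<Rightarrow> nat list set" where
  "cuts n = {cs. cs \<noteq> [] \<and> sorted_wrt (<) cs \<and> 0 < hd cs \<and> last cs = n}"

text \<open>The l-th block (0-based l) of the partition given by cs.\<close>
definition block :: "tree \<Rightarrow> nat list \<Rightarrow> nat \<Rightarrow> tree" where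
  "block u cs l = tint u (if l = 0 then 1 else cs ! (l - 1) + 1) (cs ! l)"

text \<open>I(P,t): strictly increasing maps from the k blocks to the nodes of t
  (nodes given by their post-order index in {1..nnodes t}).\<close>
definition incmaps :: "tree \<Rightarrow> nat \<Rightarrow> nat list set" where
  "incmaps t k = {fs. length fs = k \<and> sorted_wrt (<) fs \<and> set fs \<subseteq> {1..nnodes t}}"

fun graft :: "(nat list \<Rightarrow> tree list) \<Rightarrow> nat list \<Rightarrow> tree \<Rightarrow> tree" where
  "graft g p (Node ts) =
     Node (map (\<lambda>(i, c). graft g (p @ [i]) c) (zip [0..<length ts] ts) @ g p)"

definition hash :: "tree \<Rightarrow> nat list \<Rightarrow> nat list \<Rightarrow> tree \<Rightarrow> tree" where
  "hash t cs fs u =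
     graft (\<lambda>p. concat (map (\<lambda>l. if node t (fs ! l) = p then children (block u cs l) else [])
                             [0..<length cs])) [] t"

text \<open>K[T_infinity] is rendered as finitely supported functions (poly_mapping).
  Product of two basis trees.\<close>
definition tprod :: "tree \<Rightarrow> tree \<Rightarrow> (tree \<Rightarrow>\<^sub>0 'k::field)" where
  "tprod t u = (if deg u = 0 then Poly_Mapping.single t 1
     else (\<Sum>cs\<in>cuts (deg u). \<Sum>fs\<in>incmaps t (length cs).
             Poly_Mapping.single (hash t cs fs u) 1))"

definition hmult :: "(tree \<Rightarrow>\<^sub>0 'k::field) \<Rightarrow> (tree \<Rightarrow>\<^sub>0 'k) \<Rightarrow> (tree \<Rightarrow>\<^sub>0 'k)" where
  "hmult x y = (\<Sum>t\<in>Poly_Mapping.keys x. \<Sum>u\<in>Poly_Mapping.keys y.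
                  Poly_Mapping.map (\<lambda>c. (Poly_Mapping.lookup x t * Poly_Mapping.lookup y u) * c) (tprod t u))"

end

theory Submission
  imports Defs
begin


declare upt_Suc[simp del]

definition dep :: "tree \<Rightarrow> nat list" where "dep t = map length (postorder t)"
definition fdep :: "tree list \<Rightarrow> nat list" where "fdep ts = concat (map (\<lambda>c. map Suc (dep c)) ts)"

definition fpo :: "nat \<Rightarrow> tree list \<Rightarrow> nat list list" where
  "fpo k ts = concat (map (\<lambda>(i, c). map ((#) i) (postorder c)) (zip [k..<k+length ts] ts))"

lemma fpo_Nil[simp]: "fpo k [] = []" by (simp add: fpo_def)
lemma fpo_Cons[simp]: "fpo k (c#ts) = map ((#) k) (postorder c) @ fpo (Suc k) ts"
  by (simp add: fpo_def upt_conv_Cons del: upt_Suc)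

lemma postorder_fpo[simp]: "postorder (Node ts) = fpo 0 ts @ [[]]"
  by (simp add: fpo_def)

declare postorder.simps[simp del]

lemma fdep_Nil[simp]: "fdep [] = []" by (simp add: fdep_def)
lemma fdep_Cons[simp]: "fdep (c#ts) = map Suc (dep c) @ fdep ts" by (simp add: fdep_def)
lemma fdep_append[simp]: "fdep (xs @ ys) = fdep xs @ fdep ys" by (simp add: fdep_def)

lemma map_length_fpo: "map length (fpo k ts) = fdep ts"
  by (induction ts arbitrary: k) (auto simp: dep_def)

lemma dep_Node: "dep (Node ts) = fdep ts @ [0]"
  by (simp add: dep_def postorder_fpo map_length_fpo)

lemma length_postorder: "length (postorder t) = nnodes t"
proof (induction t)
  case (Node ts)
  have "length (fpo k ts) = sum_list (map nnodes ts)" for k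
    using Node by (induction ts arbitrary: k) auto
  then show ?case by (simp add: postorder_fpo)
qed

lemma length_dep: "length (dep t) = nnodes t" by (simp add: dep_def length_postorder)
lemma length_fdep: "length (fdep ts) = sum_list (map nnodes ts)"
  by (induction ts) (auto simp: length_dep)

lemma fpo_hd: "q \<in> set (fpo k ts) \<Longrightarrow> q \<noteq> [] \<and> k \<le> hd q \<and> hd q < k + length ts"
  by (induction ts arbitrary: k) fastforce+

lemma distinct_postorder: "distinct (postorder t)"
proof (induction t)
  case (Node ts)
  have "distinct (fpo k ts)" for k
    using Node
  proof (induction ts arbitrary: k)
    case (Cons c ts)
    have "distinct (map ((#) k) (postorder c))"
      using Cons.prems by (simp add: distinct_map)
    moreover have "distinct (fpo (Suc k) ts)" using Cons by auto
    moreover have "set (map ((#) k) (postorder c)) \<inter> set (fpo (Suc k) ts) = {}"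
      using fpo_hd[of _ "Suc k" ts] by fastforce
    ultimately show ?case by simp
  qed simp
  moreover have "[] \<notin> set (fpo 0 ts)" using fpo_hd by blast
  ultimately show ?case by (simp add: postorder_fpo)
qed

lemma plus0map[simp]: "map ((+) (0::nat)) xs = xs" by (induction xs) auto

lemma sucplus: "(\<lambda>xa. Suc (a + xa)) = (+) (Suc a)" by auto

lemma graft_dep:
  "dep (graft g p t) = concat (map (\<lambda>q. map ((+) (length q)) (fdep (g (p @ q))) @ [length q]) (postorder t))"
proof (induction t arbitrary: p)
  case (Node ts)
  have "fdep (map (\<lambda>(i, c). graft g (p @ [i]) c) (zip [k..<k+length ts] ts))
        = concat (map (\<lambda>q. map ((+) (length q)) (fdep (g (p @ q))) @ [length q]) (fpo k ts))" for k
    using Node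
  proof (induction ts arbitrary: k)
    case (Cons c ts)
    have IH1: "dep (graft g (p @ [k]) c) = concat (map (\<lambda>q. map ((+) (length q)) (fdep (g (p @ [k] @ q))) @ [length q]) (postorder c))"
      using Cons.prems by simp
    have "map Suc (concat (map (\<lambda>q. map ((+) (length q)) (fdep (g (p @ [k] @ q))) @ [length q]) (postorder c)))
       = concat (map (\<lambda>q. map ((+) (length q)) (fdep (g (p @ q))) @ [length q]) (map ((#) k) (postorder c)))"
      by (simp add: map_concat comp_def sucplus)
    moreover have "fdep (map (\<lambda>(i, c). graft g (p @ [i]) c) (zip [Suc k..<Suc k+length ts] ts))
        = concat (map (\<lambda>q. map ((+) (length q)) (fdep (g (p @ q))) @ [length q]) (fpo (Suc k) ts))"
      using Cons.IH[of "Suc k"] Cons.prems by simp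
    ultimately show ?case using IH1 by (simp add: upt_conv_Cons del: upt_Suc)
  qed simp
  from this[of 0] show ?case by (simp add: dep_Node postorder_fpo)
qed


fun mino :: "nat option \<Rightarrow> nat \<Rightarrow> nat" where
  "mino None e = e" | "mino (Some c) e = min c e"
fun capl :: "nat option \<Rightarrow> nat list \<Rightarrow> nat option" where
  "capl c [] = c" | "capl c (x#xs) = Some (mino (capl c xs) x)"
fun nrm :: "nat option \<Rightarrow> nat list \<Rightarrow> nat list" where
  "nrm c [] = []" | "nrm c (x#xs) = (x + 1 - mino (capl c xs) x) # nrm c xs"

lemma capl_append: "capl c (xs @ ys) = capl (capl c ys) xs"
  by (induction xs) auto
lemma nrm_append: "nrm c (xs @ ys) = nrm (capl c ys) xs @ nrm c ys"
  by (induction xs) (auto simp: capl_append)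
lemma drop_nrm: "drop k (nrm c xs) = nrm c (drop k xs)"
  by (induction xs arbitrary: k) (auto simp: drop_Cons split: nat.split)
lemma length_nrm[simp]: "length (nrm c xs) = length xs"
  by (induction xs) auto
lemma mino_Suc: "mino (map_option Suc c) (Suc x) = Suc (mino c x)"
  by (cases c) auto
lemma capl_Suc: "capl (map_option Suc c) (map Suc xs) = map_option Suc (capl c xs)"
  by (induction xs) (auto simp: mino_Suc)
lemma nrm_Suc: "nrm (map_option Suc c) (map Suc xs) = nrm c xs"
  by (induction xs) (auto simp: capl_Suc mino_Suc)
lemma nrm_Suc_None: "nrm None (map Suc xs) = nrm None xs"
  using nrm_Suc[of None] by simp

lemma capl_last0: "xs \<noteq> [] \<Longrightarrow> last xs = 0 \<Longrightarrow> capl c xs = Some 0"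
proof (induction xs)
  case (Cons x xs)
  then show ?case by (cases "xs = []"; cases c) auto
qed simp
lemma nrm_last0: "xs \<noteq> [] \<Longrightarrow> last xs = 0 \<Longrightarrow> nrm c xs = map Suc xs"
proof (induction xs)
  case (Cons x xs)
  show ?case
  proof (cases "xs = []")
    case True then show ?thesis using Cons by (cases c) auto
  next
    case False then show ?thesis using Cons by (auto simp: capl_last0)
  qed
qed simp

lemma capl_Some0: "capl (Some 0) xs = Some 0"
  by (induction xs) auto
lemma nrm_Some0[simp]: "nrm (Some 0) xs = map Suc xs"
  by (induction xs) (auto simp: capl_Some0)

lemma mino_ge: "(\<And>c'. c = Some c' \<Longrightarrow> a \<le> c') \<Longrightarrow> a \<le> x \<Longrightarrow> a \<le> mino c x"
  by (cases c) auto

lemma capl_ge: "(\<And>c'. c = Some c' \<Longrightarrow> a \<le> c') \<Longrightarrow> \<forall>x\<in>set xs. a \<le> x \<Longrightarrow> capl c xs = Some c' \<Longrightarrow> a \<le> c'"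
  by (induction xs arbitrary: c') (auto intro!: mino_ge)

lemma capl_forest: "xs \<noteq> [] \<Longrightarrow> \<forall>x\<in>set xs. 1 \<le> x \<Longrightarrow> last xs = 1 \<Longrightarrow> (\<And>c'. c = Some c' \<Longrightarrow> 1 \<le> c') \<Longrightarrow> capl c xs = Some 1"
proof (induction xs)
  case (Cons x xs)
  then show ?case
  proof (cases "xs = []")
    case True then show ?thesis using Cons by (cases c) (auto simp: min_def)
  next
    case False then show ?thesis using Cons by (auto simp: min_def)
  qed
qed simp

lemma nrm_forest: "xs \<noteq> [] \<Longrightarrow> \<forall>x\<in>set xs. 1 \<le> x \<Longrightarrow> last xs = 1 \<Longrightarrow> (\<And>c'. c = Some c' \<Longrightarrow> 1 \<le> c') \<Longrightarrow> nrm c xs = xs"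
proof (induction xs)
  case (Cons x xs)
  show ?case
  proof (cases "xs = []")
    case True then show ?thesis using Cons by (cases c) (auto simp: min_def)
  next
    case False
    then have "capl c xs = Some 1" using Cons.prems by (intro capl_forest) auto
    then show ?thesis using Cons False by (auto simp: min_def)
  qed
qed simp

lemma dep_ne[simp]: "dep t \<noteq> []"
  by (cases t) (simp add: dep_Node)
lemma last_dep[simp]: "last (dep t) = 0"
  by (cases t) (simp add: dep_Node)
lemma fdep_ge1: "x \<in> set (fdep ts) \<Longrightarrow> 1 \<le> x"
  by (induction ts) auto
lemma last_fdep: "fdep ts \<noteq> [] \<Longrightarrow> last (fdep ts) = 1"
  by (induction ts) (auto simp: last_map last_append)

definition frf :: "(nat list \<Rightarrow> bool) \<Rightarrow> nat list \<Rightarrow> nat \<Rightarrow> tree list \<Rightarrow> tree list" where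
  "frf P p k ts = concat (map (\<lambda>(i, c). rforest P (p @ [i]) c) (zip [k..<k+length ts] ts))"

lemma frf_Nil[simp]: "frf P p k [] = []" by (simp add: frf_def)
lemma frf_Cons[simp]: "frf P p k (c#ts) = rforest P (p @ [k]) c @ frf P p (Suc k) ts"
  by (simp add: frf_def upt_conv_Cons)
lemma rforest_Node: "rforest P p (Node ts) = (if P p then [Node (frf P p 0 ts)] else frf P p 0 ts)"
  by (simp add: frf_def Let_def)
declare rforest.simps[simp del]

lemma length_fpo: "length (fpo k ts) = length (fdep ts)"
  using map_length_fpo[of k ts] by (metis length_map)

lemma rforest_dep:
  "(\<forall>j<length (postorder c). P (p @ postorder c ! j) \<longleftrightarrow> lo \<le> j \<and> j < hi) \<Longrightarrow>
   fdep (rforest P p c) = drop lo (nrm None (take hi (dep c)))"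
proof (induction c arbitrary: p lo hi)
  case (Node ts)
  have F: "(\<forall>j<length (fpo k ts). P (p @ fpo k ts ! j) \<longleftrightarrow> lo \<le> j \<and> j < hi) \<Longrightarrow>
     fdep (frf P p k ts) = drop lo (nrm None (take hi (fdep ts)))" for k lo hi
    using Node.IH
  proof (induction ts arbitrary: k lo hi)
    case Nil then show ?case by simp
  next
    case (Cons c ts)
    define n1 where "n1 = length (dep c)"
    have n1: "length (postorder c) = n1" by (simp add: n1_def dep_def)
    from Cons.prems(1) have H: "\<And>j. j < length (fpo k (c#ts)) \<Longrightarrow> P (p @ fpo k (c#ts) ! j) = (lo \<le> j \<and> j < hi)"
      by blast
    have H1: "\<forall>j<length (postorder c). P ((p @ [k]) @ postorder c ! j) = (lo \<le> j \<and> j < hi)"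
    proof (intro allI impI)
      fix j assume j: "j < length (postorder c)"
      have "j < length (fpo k (c#ts))" using j by simp
      moreover have "fpo k (c#ts) ! j = k # postorder c ! j" using j by (simp add: nth_append)
      ultimately show "P ((p @ [k]) @ postorder c ! j) = (lo \<le> j \<and> j < hi)" using H by fastforce
    qed
    have c1: "fdep (rforest P (p @ [k]) c) = drop lo (nrm None (take hi (dep c)))"
      using Cons.prems(2)[of c "p @ [k]" lo hi] H1 by simp
    have H2: "\<forall>j<length (fpo (Suc k) ts). P (p @ fpo (Suc k) ts ! j) = (lo - n1 \<le> j \<and> j < hi - n1)"
    proof (intro allI impI)
      fix j assume j: "j < length (fpo (Suc k) ts)"
      have "j + n1 < length (fpo k (c#ts))" using j n1 by simp
      moreover have "fpo k (c#ts) ! (j + n1) = fpo (Suc k) ts ! j" using j n1 by (simp add: nth_append)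
      ultimately have "P (p @ fpo (Suc k) ts ! j) = (lo \<le> j + n1 \<and> j + n1 < hi)" using H by fastforce
      then show "P (p @ fpo (Suc k) ts ! j) = (lo - n1 \<le> j \<and> j < hi - n1)" by auto
    qed
    have c2: "fdep (frf P p (Suc k) ts) = drop (lo - n1) (nrm None (take (hi - n1) (fdep ts)))"
      using Cons.IH[OF H2] Cons.prems(2) by auto
    have len1: "length (map Suc (dep c)) = n1" by (simp add: n1_def)
    show ?case
    proof (cases "hi \<le> n1")
      case True
      have "take hi (fdep (c#ts)) = map Suc (take hi (dep c))"
        using True len1 by (simp add: take_map)
      then show ?thesis using c1 c2 True
        by (simp add: nrm_Suc_None)
    next
      case False
      have tk: "take hi (fdep (c#ts)) = map Suc (dep c) @ take (hi - n1) (fdep ts)"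
        using False len1 by simp
      have cap: "\<And>c'. capl None (take (hi - n1) (fdep ts)) = Some c' \<Longrightarrow> 1 \<le> c'"
        by (rule capl_ge[of None]) (auto dest!: in_set_takeD dest: fdep_ge1)
      have "nrm (capl None (take (hi - n1) (fdep ts))) (map Suc (dep c)) = map Suc (dep c)"
        by (rule nrm_forest[OF _ _ _ cap]) (auto simp: last_map)
      then have "nrm None (take hi (fdep (c#ts))) = map Suc (dep c) @ nrm None (take (hi - n1) (fdep ts))"
        by (simp only: tk nrm_append)
      moreover have "take hi (dep c) = dep c" using False n1_def by simp
      ultimately show ?thesis using c1 c2 len1
        by (simp add: nrm_last0)
    qed
  qed
  define n where "n = length (fdep ts)"
  from Node.prems have H: "\<And>j. j < length (postorder (Node ts)) \<Longrightarrow> P (p @ postorder (Node ts) ! j) = (lo \<le> j \<and> j < hi)"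
    by blast
  have cF: "\<forall>j<length (fpo 0 ts). P (p @ fpo 0 ts ! j) \<longleftrightarrow> lo \<le> j \<and> j < hi"
  proof (intro allI impI)
    fix j assume j: "j < length (fpo 0 ts)"
    then show "P (p @ fpo 0 ts ! j) \<longleftrightarrow> lo \<le> j \<and> j < hi" using H[of j] by (simp add: nth_append)
  qed
  have cR: "P p \<longleftrightarrow> lo \<le> n \<and> n < hi"
    using H[of n] by (simp add: nth_append n_def length_fpo)
  have Fi: "fdep (frf P p 0 ts) = drop lo (nrm None (take hi (fdep ts)))"
    using F[OF cF] .
  show ?case
  proof (cases "P p")
    case True
    then have hi: "lo \<le> n" "n < hi" using cR by auto
    have e1: "nrm None (fdep ts) = fdep ts"
      by (cases "fdep ts = []") (auto intro!: nrm_forest fdep_ge1 last_fdep)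
    have "take hi (fdep ts @ [0]) = fdep ts @ [0]" using hi n_def by simp
    then have "drop lo (nrm None (take hi (dep (Node ts)))) = drop lo (map Suc (fdep ts)) @ [1]"
      using hi by (simp add: dep_Node nrm_append nrm_last0 n_def)
    moreover have "fdep (rforest P p (Node ts)) = map Suc (drop lo (fdep ts)) @ [1]"
      using True Fi hi by (simp add: rforest_Node dep_Node n_def e1 drop_map)
    ultimately show ?thesis by (simp add: drop_map)
  next
    case False
    then have "n < lo \<or> hi \<le> n" using cR by auto
    then show ?thesis
    proof
      assume "n < lo"
      then show ?thesis using False Fi by (simp add: rforest_Node dep_Node n_def)
    next
      assume "hi \<le> n"
      then show ?thesis using False Fi by (simp add: rforest_Node dep_Node n_def)
    qed
  qed
qed


lemma children_Node: "u = Node (children u)" by (cases u) auto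

lemma nnodes_pos: "0 < nnodes t" by (cases t) auto

lemma dep_children: "dep u = fdep (children u) @ [0]"
  by (subst children_Node) (simp only: dep_Node)

lemma deg_len: "deg u = length (fdep (children u))"
  using length_dep[of u] by (simp add: deg_def dep_children)

lemma restrict_frf: "restrict u A = Node (frf (\<lambda>q. q \<in> node u ` A) [] 0 (children u))"
  by (simp add: restrict_def frf_def)

lemma block_fdep:
  assumes "1 \<le> a" "a \<le> b" "b \<le> deg u"
  shows "fdep (children (tint u a b)) = drop (a - 1) (nrm None (take b (fdep (children u))))"
proof -
  have A: "{a..b} \<inter> {1..deg u} = {a..b}" using assms by auto
  have t: "tint u a b = restrict u {a..b}"
    using assms by (auto simp: tint_def A)
  define P where "P = (\<lambda>q. q \<in> node u ` {a..b})"
  have len: "length (postorder u) = deg u + 1"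
    using length_postorder[of u] nnodes_pos[of u] by (simp add: deg_def)
  have dist: "distinct (postorder u)" by (rule distinct_postorder)
  have cond: "\<forall>j<length (postorder u). P ([] @ postorder u ! j) \<longleftrightarrow> a - 1 \<le> j \<and> j < b"
  proof (intro allI impI)
    fix j assume j: "j < length (postorder u)"
    have "P (postorder u ! j) \<longleftrightarrow> (\<exists>i\<in>{a..b}. postorder u ! j = postorder u ! (i - 1))"
      by (auto simp: P_def node_def)
    also have "\<dots> \<longleftrightarrow> (\<exists>i\<in>{a..b}. j = i - 1)"
    proof
      assume "\<exists>i\<in>{a..b}. postorder u ! j = postorder u ! (i - 1)"
      then obtain i where "i\<in>{a..b}" "postorder u ! j = postorder u ! (i - 1)" by blast
      then show "\<exists>i\<in>{a..b}. j = i - 1" using j dist len assms by (auto simp: nth_eq_iff_index_eq)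
    qed auto
    also have "\<dots> \<longleftrightarrow> a - 1 \<le> j \<and> j < b"
      using assms by (auto intro: bexI[of _ "Suc j"])
    finally show "P ([] @ postorder u ! j) \<longleftrightarrow> a - 1 \<le> j \<and> j < b" by simp
  qed
  have "fdep (rforest P [] u) = drop (a - 1) (nrm None (take b (dep u)))"
    by (rule rforest_dep[OF cond])
  moreover have "\<not> P []"
  proof -
    have "postorder u ! deg u = []"
      by (subst children_Node) (simp add: nth_append length_fpo deg_len del: fpo_Cons)
    then show ?thesis using cond[rule_format, of "deg u"] len assms by simp
  qed
  ultimately have "fdep (frf P [] 0 (children u)) = drop (a - 1) (nrm None (take b (dep u)))"
    by (subst (asm) children_Node) (simp add: rforest_Node)
  moreover have "take b (dep u) = take b (fdep (children u))"
    using assms by (simp add: dep_children deg_len)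
  ultimately show ?thesis by (simp add: t restrict_frf P_def)
qed


fun toCF :: "nat \<Rightarrow> nat \<Rightarrow> nat list \<Rightarrow> nat list \<times> nat list" where
  "toCF i s [] = ([], [])"
| "toCF i s (k#ks) = (if k = 0 then toCF (Suc i) s ks
     else (case toCF (Suc i) (s+k) ks of (cs, fs) \<Rightarrow> ((s+k)#cs, i#fs)))"

lemma toCF_len: "length (fst (toCF i s ks)) = length (snd (toCF i s ks))"
  by (induction i s ks rule: toCF.induct) (auto split: prod.split)

lemma toCF_cs1: "\<forall>x\<in>set (fst (toCF i s ks)). s < x"
proof (induction i s ks rule: toCF.induct)
  case (2 i s k ks)
  obtain cs fs where e: "toCF (Suc i) (s+k) ks = (cs, fs)" by fastforce
  show ?case
  proof (cases "k = 0")
    case False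
    then show ?thesis using 2(2)[OF False] e by auto
  qed (use 2 in auto)
qed simp

lemma toCF_cs2: "sorted_wrt (<) (fst (toCF i s ks))"
proof (induction i s ks rule: toCF.induct)
  case (2 i s k ks)
  obtain cs fs where e: "toCF (Suc i) (s+k) ks = (cs, fs)" by fastforce
  show ?case
  proof (cases "k = 0")
    case False
    then show ?thesis using 2(2)[OF False] e toCF_cs1[of "Suc i" "s+k" ks] by auto
  qed (use 2 in auto)
qed simp

lemma toCF_cs: "(\<forall>x\<in>set (fst (toCF i s ks)). s < x) \<and> sorted_wrt (<) (fst (toCF i s ks))"
  using toCF_cs1 toCF_cs2 by blast

lemma toCF_fs1: "\<forall>x\<in>set (snd (toCF i s ks)). i \<le> x \<and> x < i + length ks"
proof (induction i s ks rule: toCF.induct)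
  case (2 i s k ks)
  obtain cs fs where e: "toCF (Suc i) (s+k) ks = (cs, fs)" by fastforce
  show ?case
  proof (cases "k = 0")
    case False
    then show ?thesis using 2(2)[OF False] e by fastforce
  next
    case True
    then show ?thesis using 2(1)[OF True] by fastforce
  qed
qed simp

lemma toCF_fs2: "sorted_wrt (<) (snd (toCF i s ks))"
proof (induction i s ks rule: toCF.induct)
  case (2 i s k ks)
  obtain cs fs where e: "toCF (Suc i) (s+k) ks = (cs, fs)" by fastforce
  show ?case
  proof (cases "k = 0")
    case False
    then show ?thesis using 2(2)[OF False] e toCF_fs1[of "Suc i" "s+k" ks] by fastforce
  qed (use 2 in auto)
qed simp

lemma toCF_fs: "(\<forall>x\<in>set (snd (toCF i s ks)). i \<le> x \<and> x < i + length ks) \<and> sorted_wrt (<) (snd (toCF i s ks))"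
  using toCF_fs1 toCF_fs2 by blast

lemma toCF_last: "(fst (toCF i s ks) = [] \<longleftrightarrow> sum_list ks = 0) \<and>
   (fst (toCF i s ks) \<noteq> [] \<longrightarrow> last (fst (toCF i s ks)) = s + sum_list ks)"
proof (induction i s ks rule: toCF.induct)
  case (2 i s k ks)
  obtain cs fs where e: "toCF (Suc i) (s+k) ks = (cs, fs)" by fastforce
  show ?case
  proof (cases "k = 0")
    case False
    then show ?thesis using 2(2)[OF False] e by (simp del: sum_list_eq_0_iff)
  next
    case True
    then show ?thesis using 2(1)[OF True] by (simp del: sum_list_eq_0_iff)
  qed
qed simp

lemma toCF_inj: "toCF i s ks1 = toCF i s ks2 \<Longrightarrow> length ks1 = length ks2 \<Longrightarrow> ks1 = ks2"
proof (induction i s ks1 arbitrary: ks2 rule: toCF.induct)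
  case (1 i s)
  then show ?case by simp
next
  case (2 i s k ks)
  then obtain k2 ks2' where k2: "ks2 = k2 # ks2'" by (cases ks2) auto
  have fsi: "\<forall>x\<in>set (snd (toCF (Suc i) s' xs)). i < x" for s' xs
    using toCF_fs[of "Suc i" s' xs] by auto
  show ?case
  proof (cases "k = 0")
    case True
    show ?thesis
    proof (cases "k2 = 0")
      case True
      then show ?thesis using 2 \<open>k = 0\<close> k2 by auto
    next
      case False
      then have "i \<in> set (snd (toCF i s ks2))" using k2 by (auto split: prod.split)
      moreover have "toCF i s (k#ks) = toCF (Suc i) s ks" using \<open>k = 0\<close> by simp
      ultimately have "i \<in> set (snd (toCF (Suc i) s ks))" using 2(3) by simp
      then show ?thesis using fsi by blast
    qed
  next
    case False
    show ?thesis
    proof (cases "k2 = 0")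
      case True
      then have "i \<in> set (snd (toCF i s (k#ks)))" using False by (auto split: prod.split)
      moreover have "toCF i s ks2 = toCF (Suc i) s ks2'" using True k2 by simp
      ultimately have "i \<in> set (snd (toCF (Suc i) s ks2'))" using 2(3) by simp
      then show ?thesis using fsi by blast
    next
      case k2nz: False
      obtain cs1 fs1 where e1: "toCF (Suc i) (s+k) ks = (cs1, fs1)" by fastforce
      obtain cs2 fs2 where e2: "toCF (Suc i) (s+k2) ks2' = (cs2, fs2)" by fastforce
      have "((s+k)#cs1, i#fs1) = ((s+k2)#cs2, i#fs2)"
        using 2(3) False k2nz k2 e1 e2 by simp
      then have "k = k2" "cs1 = cs2" "fs1 = fs2" by auto
      then have "toCF (Suc i) (s+k) ks = toCF (Suc i) (s+k) ks2'"
        using e1 e2 by simp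
      then show ?thesis using 2(2)[OF False] 2(4) k2 \<open>k = k2\<close> by auto
    qed
  qed
qed

lemma toCF_surj:
  "length cs = length fs \<Longrightarrow> sorted_wrt (<) cs \<Longrightarrow> \<forall>x\<in>set cs. s < x \<Longrightarrow> sorted_wrt (<) fs \<Longrightarrow>
   \<forall>x\<in>set fs. i \<le> x \<and> x < i + L \<Longrightarrow> \<exists>ks. length ks = L \<and> toCF i s ks = (cs, fs)"
proof (induction L arbitrary: i s cs fs)
  case 0
  then show ?case by (cases fs) auto
next
  case (Suc L)
  show ?case
  proof (cases "fs \<noteq> [] \<and> hd fs = i")
    case True
    then obtain f fs' where fs: "fs = f # fs'" "f = i" by (cases fs) auto
    then obtain c cs' where cs: "cs = c # cs'" using Suc.prems(1) by (cases cs) auto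
    have "\<exists>ks. length ks = L \<and> toCF (Suc i) c ks = (cs', fs')"
      apply (rule Suc.IH) using Suc.prems fs cs by auto
    then obtain ks where "length ks = L" "toCF (Suc i) c ks = (cs', fs')" by blast
    moreover have "c - s \<noteq> 0" "s + (c - s) = c" using Suc.prems(3) cs by auto
    ultimately show ?thesis using fs cs by (intro exI[of _ "(c - s) # ks"]) auto
  next
    case False
    have "\<forall>x\<in>set fs. Suc i \<le> x \<and> x < Suc i + L"
    proof
      fix x assume x: "x \<in> set fs"
      then obtain f fs' where fs: "fs = f # fs'" by (cases fs) auto
      have "i < f" using False fs Suc.prems(5) by fastforce
      moreover have "x = f \<or> f < x" using x fs Suc.prems(4) by auto
      ultimately show "Suc i \<le> x \<and> x < Suc i + L" using Suc.prems(5) x by auto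
    qed
    then have "\<exists>ks. length ks = L \<and> toCF (Suc i) s ks = (cs, fs)"
      using Suc.prems by (intro Suc.IH) auto
    then obtain ks where "length ks = L" "toCF (Suc i) s ks = (cs, fs)" by blast
    then show ?thesis by (intro exI[of _ "0 # ks"]) auto
  qed
qed

definition Cmp :: "nat \<Rightarrow> nat \<Rightarrow> nat list set" where
  "Cmp m n = {ks. length ks = m \<and> sum_list ks = n}"

definition Sig :: "tree \<Rightarrow> tree \<Rightarrow> (nat list \<times> nat list) set" where
  "Sig t u = Sigma (cuts (deg u)) (\<lambda>cs. incmaps t (length cs))"

lemma sorted_hd_all: "sorted_wrt (<) (xs::nat list) \<Longrightarrow> xs \<noteq> [] \<Longrightarrow> (\<forall>x\<in>set xs. a < x) \<longleftrightarrow> a < hd xs"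
  by (cases xs) auto

lemma toCF_bij:
  assumes "0 < n"
  shows "bij_betw (toCF 1 0) (Cmp (nnodes t) n) (Sigma (cuts n) (\<lambda>cs. incmaps t (length cs)))"
proof (rule bij_betwI')
  fix x y assume "x \<in> Cmp (nnodes t) n" "y \<in> Cmp (nnodes t) n"
  then show "(toCF 1 0 x = toCF 1 0 y) = (x = y)" using toCF_inj[of 1 0 x y] by (auto simp: Cmp_def)
next
  fix ks assume ks: "ks \<in> Cmp (nnodes t) n"
  obtain cs fs where cf: "toCF 1 0 ks = (cs, fs)" by fastforce
  have sk: "sum_list ks = n" using ks by (simp add: Cmp_def)
  have "cs \<noteq> []" using toCF_last[of 1 0 ks] cf sk assms by (simp del: sum_list_eq_0_iff)
  moreover have "last cs = n" using toCF_last[of 1 0 ks] cf sk \<open>cs \<noteq> []\<close> by simp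
  moreover have "sorted_wrt (<) cs" "\<forall>x\<in>set cs. 0 < x" using toCF_cs[of 1 0 ks] cf by auto
  moreover have "sorted_wrt (<) fs" "set fs \<subseteq> {1..nnodes t}" "length fs = length cs"
    using toCF_fs[of 1 0 ks] toCF_len[of 1 0 ks] cf ks by (auto simp: Cmp_def)
  ultimately show "toCF 1 0 ks \<in> Sigma (cuts n) (\<lambda>cs. incmaps t (length cs))"
    using cf sorted_hd_all[of cs 0] by (auto simp: cuts_def incmaps_def)
next
  fix p assume p: "p \<in> Sigma (cuts n) (\<lambda>cs. incmaps t (length cs))"
  obtain cs fs where pp: "p = (cs, fs)" by fastforce
  have c: "cs \<noteq> []" "sorted_wrt (<) cs" "0 < hd cs" "last cs = n"
    and f: "length fs = length cs" "sorted_wrt (<) fs" "set fs \<subseteq> {1..nnodes t}"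
    using p pp by (auto simp: cuts_def incmaps_def)
  have "\<exists>ks. length ks = nnodes t \<and> toCF 1 0 ks = (cs, fs)"
    using c f sorted_hd_all[of cs 0] by (intro toCF_surj) auto
  then obtain ks where ks: "length ks = nnodes t" "toCF 1 0 ks = (cs, fs)" by blast
  have "sum_list ks = n" using toCF_last[of 1 0 ks] ks c by (simp del: sum_list_eq_0_iff)
  then show "\<exists>ks\<in>Cmp (nnodes t) n. p = toCF 1 0 ks" using ks pp by (auto simp: Cmp_def)
qed


definition Bk :: "nat list \<Rightarrow> nat \<Rightarrow> nat \<Rightarrow> nat list" where
  "Bk E lo hi = nrm None (drop lo (take hi E))"

fun FR :: "nat list \<Rightarrow> nat list \<Rightarrow> nat \<Rightarrow> nat list \<Rightarrow> nat list" where
  "FR (d#D) E s (k#ks) = map ((+) d) (Bk E s (s+k)) @ d # FR D E (s+k) ks"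
| "FR _ _ _ _ = []"

lemma nomatch: "\<forall>x\<in>set fs. x \<noteq> v \<Longrightarrow>
  concat (map (\<lambda>(c, f, lo). if f = v then X c lo else []) (zip cs (zip fs L))) = []"
proof -
  assume a: "\<forall>x\<in>set fs. x \<noteq> v"
  have "\<forall>x\<in>set (zip cs (zip fs L)). fst (snd x) \<noteq> v"
  proof
    fix x assume x: "x \<in> set (zip cs (zip fs L))"
    obtain c f lo where xe: "x = (c, f, lo)" by (cases x) auto
    have "(f, lo) \<in> set (zip fs L)" using x xe by (auto dest: set_zip_rightD)
    then have "f \<in> set fs" by (rule set_zip_leftD)
    then show "fst (snd x) \<noteq> v" using a xe by auto
  qed
  then show ?thesis by auto
qed

lemma FR_toCF:
  "length D = length ks \<Longrightarrow>
   FR D E s ks = concat (map (\<lambda>j. map ((+) (D!j))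
      (concat (map (\<lambda>(c, f, lo). if f = i + j then Bk E lo c else [])
         (zip (fst (toCF i s ks)) (zip (snd (toCF i s ks)) (s # fst (toCF i s ks)))))) @ [D!j]) [0..<length ks])"
proof (induction ks arbitrary: i s D)
  case Nil
  then show ?case by simp
next
  case (Cons k ks)
  then obtain d D' where D: "D = d # D'" by (cases D) auto
  have up: "[0..<Suc n] = 0 # map Suc [0..<n]" for n
    by (simp add: upt_conv_Cons map_Suc_upt)
  have fsi: "\<forall>x\<in>set (snd (toCF (Suc i) s' ks)). x \<noteq> i" for s'
    using toCF_fs[of "Suc i" s' ks] by fastforce
  show ?case
  proof (cases "k = 0")
    case True
    have IH: "FR D' E s ks = concat (map (\<lambda>j. map ((+) (D'!j))
      (concat (map (\<lambda>(c, f, lo). if f = Suc i + j then Bk E lo c else [])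
         (zip (fst (toCF (Suc i) s ks)) (zip (snd (toCF (Suc i) s ks)) (s # fst (toCF (Suc i) s ks)))))) @ [D'!j]) [0..<length ks])"
      using Cons.IH[of D' s "Suc i"] Cons.prems D by simp
    have z: "concat (map (\<lambda>(c, f, lo). if f = i then Bk E lo c else [])
         (zip (fst (toCF (Suc i) s ks)) (zip (snd (toCF (Suc i) s ks)) (s # fst (toCF (Suc i) s ks))))) = []"
      by (rule nomatch[OF fsi])
    show ?thesis using True IH z D
      by (simp add: up comp_def Bk_def)
  next
    case False
    obtain cs fs where e: "toCF (Suc i) (s+k) ks = (cs, fs)" by fastforce
    have IH: "FR D' E (s+k) ks = concat (map (\<lambda>j. map ((+) (D'!j))
      (concat (map (\<lambda>(c, f, lo). if f = Suc i + j then Bk E lo c else [])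
         (zip cs (zip fs ((s+k) # cs))))) @ [D'!j]) [0..<length ks])"
      using Cons.IH[of D' "s+k" "Suc i"] Cons.prems D e by simp
    have z: "concat (map (\<lambda>(c, f, lo). if f = i then Bk E lo c else []) (zip cs (zip fs ((s+k) # cs)))) = []"
      using nomatch[OF fsi[of "s+k"]] e by simp
    show ?thesis using False IH z D e
      by (simp add: up comp_def)
  qed
qed

lemma fdep_concat: "fdep (concat xss) = concat (map fdep xss)"
  by (induction xss) auto

lemma map_upt_zip3:
  "length fs = length cs \<Longrightarrow>
   map (\<lambda>l. F (cs!l) (fs!l) ((0#cs)!l)) [0..<length cs] = map (\<lambda>(c, f, lo). F c f lo) (zip cs (zip fs (0#cs)))"
  by (rule nth_equalityI) auto

lemma sorted_nth_le_last: "sorted_wrt (<) (xs::nat list) \<Longrightarrow> l < length xs \<Longrightarrow> xs!l \<le> last xs"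
proof -
  assume s: "sorted_wrt (<) xs" and l: "l < length xs"
  then have ne: "xs \<noteq> []" by auto
  have "last xs = xs ! (length xs - 1)" using ne by (simp add: last_conv_nth)
  moreover have "xs!l \<le> xs ! (length xs - 1)"
  proof (cases "l = length xs - 1")
    case False
    then have "l < length xs - 1" using l by simp
    then show ?thesis using s l by (simp add: sorted_wrt_iff_nth_less less_imp_le)
  qed simp
  ultimately show ?thesis by simp
qed

lemma hash_dep:
  assumes ks: "ks \<in> Cmp (nnodes t) (deg u)" and n: "0 < deg u"
    and cf: "toCF 1 0 ks = (cs, fs)"
  shows "dep (hash t cs fs u) = FR (dep t) (fdep (children u)) 0 ks"
proof -
  define E where "E = fdep (children u)"
  define po where "po = postorder t"
  define m where "m = length po"
  have lks: "length ks = m" using ks by (simp add: Cmp_def m_def po_def length_postorder)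
  have cut: "cs \<in> cuts (deg u)" and inc: "fs \<in> incmaps t (length cs)"
    using bij_betw_apply[OF toCF_bij[OF n, of t] ks] cf by auto
  have lfs: "length fs = length cs" and fsr: "set fs \<subseteq> {1..m}"
    using inc by (auto simp: incmaps_def m_def po_def length_postorder)
  have csr: "sorted_wrt (<) cs" "cs \<noteq> []" "0 < hd cs" "last cs = deg u" using cut by (auto simp: cuts_def)
  have dist: "distinct po" by (simp add: po_def distinct_postorder)
  define g where "g = (\<lambda>p. concat (map (\<lambda>l. if node t (fs ! l) = p then children (block u cs l) else [])
                             [0..<length cs]))"
  have h: "hash t cs fs u = graft g [] t" by (simp add: hash_def g_def)
  have blk: "fdep (children (block u cs l)) = Bk E ((0#cs)!l) (cs!l)" if l: "l < length cs" for l
  proof -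
    have lo: "(0#cs)!l < cs!l"
    proof (cases l)
      case (Suc l')
      then show ?thesis using csr(1) l by (simp add: sorted_wrt_iff_nth_less)
    next
      case 0 then show ?thesis using csr by (cases cs) auto
    qed
    have hi: "cs!l \<le> deg u" using sorted_nth_le_last[OF csr(1) l] csr by simp
    have "block u cs l = tint u ((0#cs)!l + 1) (cs!l)"
      by (cases l) (auto simp: block_def)
    then show ?thesis using block_fdep[of "(0#cs)!l + 1" "cs!l" u] lo hi
      by (simp add: Bk_def E_def drop_nrm)
  qed
  have gq: "fdep (g (po!j)) = concat (map (\<lambda>(c, f, lo). if f = 1 + j then Bk E lo c else []) (zip cs (zip fs (0#cs))))"
    if j: "j < m" for j
  proof -
    have eq: "node t (fs!l) = po!j \<longleftrightarrow> fs!l = 1 + j" if l: "l < length cs" for l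
    proof -
      have "fs!l \<in> {1..m}" using fsr l lfs by (metis nth_mem subsetD)
      then have "node t (fs!l) = po!(fs!l - 1)" "fs!l - 1 < m" by (auto simp: node_def po_def)
      then show ?thesis using dist j nth_eq_iff_index_eq[OF dist, of "fs!l - 1" j] \<open>fs!l \<in> {1..m}\<close>
        by (auto simp: m_def)
    qed
    have "fdep (g (po!j)) = concat (map (\<lambda>l. if fs!l = 1 + j then Bk E ((0#cs)!l) (cs!l) else []) [0..<length cs])"
      unfolding g_def fdep_concat map_map
      by (rule arg_cong[where f=concat], rule map_cong) (auto simp: eq blk)
    also have "\<dots> = concat (map (\<lambda>(c, f, lo). if f = 1 + j then Bk E lo c else []) (zip cs (zip fs (0#cs))))"
      using map_upt_zip3[OF lfs, of "\<lambda>c f lo. if f = 1 + j then Bk E lo c else []"] by simp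
    finally show ?thesis .
  qed
  have "dep (hash t cs fs u) = concat (map (\<lambda>q. map ((+) (length q)) (fdep (g q)) @ [length q]) po)"
    by (simp add: h graft_dep po_def)
  also have "\<dots> = concat (map (\<lambda>j. map ((+) (length (po!j))) (fdep (g (po!j))) @ [length (po!j)]) [0..<m])"
    by (subst map_nth[symmetric]) (simp add: m_def comp_def)
  also have "\<dots> = concat (map (\<lambda>j. map ((+) (dep t!j)) (concat (map (\<lambda>(c, f, lo). if f = 1 + j then Bk E lo c else []) (zip cs (zip fs (0#cs))))) @ [dep t!j]) [0..<m])"
    by (rule arg_cong[where f=concat], rule map_cong) (simp_all add: gq[unfolded po_def m_def] dep_def po_def m_def)
  also have "\<dots> = FR (dep t) E 0 ks"
    using FR_toCF[of "dep t" ks E 0 1] cf lks by (simp add: dep_def po_def m_def)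
  finally show ?thesis by (simp add: E_def)
qed


fun omin :: "nat option \<Rightarrow> nat option \<Rightarrow> nat option" where
  "omin None y = y" | "omin x None = x" | "omin (Some a) (Some b) = Some (min a b)"

lemma omin_None2[simp]: "omin c None = c" by (cases c) auto

lemma mino_le: "mino m e \<le> e" by (cases m) auto

lemma V_A1: "f - mino mn2 f = (a3+1+f - mino (omin c mn2) f) - mino (map_option (\<lambda>M. a3+1+M-mino c M) mn2) (a3+1+f - mino (omin c mn2) f)"
  by (cases c; cases mn2) (auto simp: min_def)

lemma V_A2: "Some (mino (map_option (\<lambda>M. a3+1+M-mino c M) mn2) (a3+1+f - mino (omin c mn2) f))
   = map_option (\<lambda>M. a3+1+M-mino c M) (Some (mino mn2 f))"
  by (cases c; cases mn2) (auto simp: min_def)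

lemma V_A3: "Some (mino (omin c mn2) f) = omin c (Some (mino mn2 f))"
  by (cases c; cases mn2) (auto simp: min_def)

fun rh :: "nat \<times> nat option \<Rightarrow> bool list \<Rightarrow> nat list \<Rightarrow> nat list \<Rightarrow> nat list" where
  "rh st (False#w) (d#D) E = d # rh (d, None) w D E"
| "rh (a, mn) (True#w) D (e#E) = (a + 1 + e - mino mn e) # rh (a, Some (mino mn e)) w D E"
| "rh _ _ _ _ = []"

fun vl :: "nat \<Rightarrow> nat list \<Rightarrow> bool" where
  "vl a [] = True" | "vl a (e#es) = (e \<le> a + 1 \<and> vl e es)"

datatype L3 = T | U | V

definition INV :: "nat \<times> nat option \<Rightarrow> nat \<times> nat option \<Rightarrow> nat \<times> nat option \<Rightarrow> nat \<times> nat option \<Rightarrow> bool" where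
  "INV s1 s2 s3 s4 = (fst s1 = fst s4 \<and> (
     (snd s1 = None \<and> fst s2 = fst s1 \<and> (\<exists>c. snd s3 = omin c (snd s2) \<and>
         snd s4 = map_option (\<lambda>M. fst s3 + 1 + M - mino c M) (snd s2)))
   \<or> (\<exists>m. snd s1 = Some m \<and> snd s4 = Some m \<and> snd s2 = snd s3 \<and> m \<le> fst s3 \<and>
         fst s2 = fst s1 + 1 + fst s3 - m)))"

abbreviation cnt :: "L3 \<Rightarrow> L3 list \<Rightarrow> nat" where "cnt x r \<equiv> length (filter ((=) x) r)"

lemma lock:
  "INV s1 s2 s3 s4 \<Longrightarrow> vl (fst s3) E \<Longrightarrow> length D = cnt T r \<Longrightarrow> length E = cnt U r \<Longrightarrow> length F = cnt V r \<Longrightarrow>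
   rh s2 (map (\<lambda>x. x = V) r) (rh s1 (map (\<lambda>x. x = U) (filter (\<lambda>x. x \<noteq> V) r)) D E) F
   = rh s4 (map (\<lambda>x. x \<noteq> T) r) D (rh s3 (map (\<lambda>x. x = V) (filter (\<lambda>x. x \<noteq> T) r)) E F)"
proof (induction r arbitrary: s1 s2 s3 s4 D E F)
  case Nil
  then show ?case by simp
next
  case (Cons x r)
  obtain a1 m1 where s1: "s1 = (a1, m1)" by fastforce
  obtain a2 m2 where s2: "s2 = (a2, m2)" by fastforce
  obtain a3 m3 where s3: "s3 = (a3, m3)" by fastforce
  obtain a4 m4 where s4: "s4 = (a4, m4)" by fastforce
  show ?case
  proof (cases x)
    case T
    then obtain d D' where D: "D = d # D'" using Cons.prems by (cases D) auto
    have inv: "INV (d, None) (d, None) s3 (d, None)"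
      unfolding INV_def using s3 by (auto intro!: exI[of _ m3])
    show ?thesis using Cons.IH[OF inv] Cons.prems T D by simp
  next
    case U
    then obtain e E' where E: "E = e # E'" using Cons.prems by (cases E) auto
    have IH: "\<And>s1 s2 s3 s4 D E F. INV s1 s2 s3 s4 \<Longrightarrow> vl (fst s3) E \<Longrightarrow> length D = cnt T r \<Longrightarrow> length E = cnt U r \<Longrightarrow> length F = cnt V r \<Longrightarrow>
      rh s2 (map (\<lambda>x. x = V) r) (rh s1 (map (\<lambda>x. x = U) (filter (\<lambda>x. x \<noteq> V) r)) D E) F
      = rh s4 (map (\<lambda>x. x \<noteq> T) r) D (rh s3 (map (\<lambda>x. x = V) (filter (\<lambda>x. x \<noteq> T) r)) E F)"
      by (rule Cons.IH)
    have inv: "INV s1 s2 s3 s4" and vle: "e \<le> a3 + 1" "vl e E'"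
      using Cons.prems E s3 by auto
    have a14: "a1 = a4" using inv s1 s4 by (simp add: INV_def)
    have key: "mino m4 e = mino m1 e"
      using inv unfolding INV_def
    proof (elim conjE disjE exE)
      fix c assume h: "snd s1 = None" "snd s4 = map_option (\<lambda>M. fst s3 + 1 + M - mino c M) (snd s2)"
      show ?thesis
      proof (cases m2)
        case (Some M)
        have "mino c M \<le> M" by (rule mino_le)
        then show ?thesis using h s1 s2 s3 s4 Some vle by (auto simp: min_def)
      qed (use h s1 s2 s3 s4 in auto)
    qed (use s1 s4 in auto)
    have inv': "INV (a1, Some (mino m1 e)) (a1 + 1 + e - mino m1 e, None) (e, None) (a4, Some (mino m4 e))"
      unfolding INV_def using key a14 mino_le[of m1 e] by auto
    have lens: "length D = cnt T r" "length E' = cnt U r" "length F = cnt V r"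
      using Cons.prems U E by auto
    show ?thesis using IH[OF inv' _ lens] vle U E s1 s2 s3 s4 key a14 by simp
  next
    case V
    then obtain f F' where F: "F = f # F'" using Cons.prems by (cases F) auto
    have IH: "\<And>s1 s2 s3 s4 D E F. INV s1 s2 s3 s4 \<Longrightarrow> vl (fst s3) E \<Longrightarrow> length D = cnt T r \<Longrightarrow> length E = cnt U r \<Longrightarrow> length F = cnt V r \<Longrightarrow>
      rh s2 (map (\<lambda>x. x = V) r) (rh s1 (map (\<lambda>x. x = U) (filter (\<lambda>x. x \<noteq> V) r)) D E) F
      = rh s4 (map (\<lambda>x. x \<noteq> T) r) D (rh s3 (map (\<lambda>x. x = V) (filter (\<lambda>x. x \<noteq> T) r)) E F)"
      by (rule Cons.IH)
    have inv: "INV s1 s2 s3 s4" and vle: "vl a3 E" using Cons.prems s3 by auto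
    have lens: "length D = cnt T r" "length E = cnt U r" "length F' = cnt V r"
      using Cons.prems V F by auto
    define y where "y = a3 + 1 + f - mino m3 f"
    have a14: "a1 = a4" using inv s1 s4 by (simp add: INV_def)
    have main: "a2 + 1 + f - mino m2 f = a4 + 1 + y - mino m4 y \<and>
       INV s1 (a2, Some (mino m2 f)) (a3, Some (mino m3 f)) (a4, Some (mino m4 y))"
      using inv[unfolded INV_def]
    proof (elim conjE disjE exE)
      fix c assume h: "fst s1 = fst s4" "snd s1 = None" "fst s2 = fst s1" "snd s3 = omin c (snd s2)"
        "snd s4 = map_option (\<lambda>M. fst s3 + 1 + M - mino c M) (snd s2)"
      have e1: "f - mino m2 f = y - mino m4 y"
        using V_A1[of f m2 a3 c] h s1 s2 s3 s4 by (simp add: y_def)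
      have "mino m2 f \<le> f" "mino m4 y \<le> y" by (rule mino_le)+
      then have "a2 + 1 + f - mino m2 f = a4 + 1 + y - mino m4 y" using e1 h s1 s2 s4 by simp
      moreover have "Some (mino m3 f) = omin c (Some (mino m2 f))"
        using V_A3[of c m2 f] h s2 s3 by simp
      moreover have "Some (mino m4 y) = map_option (\<lambda>M. a3 + 1 + M - mino c M) (Some (mino m2 f))"
        using V_A2[of a3 c m2 f] h s2 s3 s4 by (simp add: y_def)
      ultimately show ?thesis unfolding INV_def using h s1 s2 s3 s4 by auto
    next
      fix m assume h: "fst s1 = fst s4" "snd s1 = Some m" "snd s4 = Some m" "snd s2 = snd s3" "m \<le> fst s3"
        "fst s2 = fst s1 + 1 + fst s3 - m"
      have "mino m3 f \<le> f" by (rule mino_le)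
      then have yy: "m < y" using h s3 by (simp add: y_def)
      then have "mino m4 y = m" using h s4 by simp
      then show ?thesis unfolding INV_def using h s1 s2 s3 s4 yy \<open>mino m3 f \<le> f\<close>
        by (auto simp: y_def)
    qed
    show ?thesis using IH[OF main[THEN conjunct2] _ lens] vle V F s1 s2 s3 s4 main y_def by simp
  qed
qed


lemma split1: "A1 @ (1::nat) # R1 = A2 @ 1 # R2 \<Longrightarrow> 1 \<notin> set A1 \<Longrightarrow> 1 \<notin> set A2 \<Longrightarrow> A1 = A2 \<and> R1 = R2"
proof (induction A1 arbitrary: A2)
  case Nil then show ?case by (cases A2) auto
next
  case (Cons a A1) then show ?case by (cases A2) auto
qed

lemma dep_split: "map Suc (dep c) = map Suc (fdep (children c)) @ [1] \<and> 1 \<notin> set (map Suc (fdep (children c)))"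
  using fdep_ge1[of _ "children c"] by (auto simp: dep_children)

lemma dep_inj: "dep t1 = dep t2 \<Longrightarrow> t1 = t2"
proof (induction t1 arbitrary: t2)
  case (Node ts1)
  obtain ts2 where t2: "t2 = Node ts2" by (cases t2) auto
  have "fdep ts1 = fdep ts2 \<Longrightarrow> ts1 = ts2" for ts2
    using Node.IH
  proof (induction ts1 arbitrary: ts2)
    case Nil then show ?case by (cases ts2) auto
  next
    case (Cons c1 ts1)
    then obtain c2 ts2' where ts2: "ts2 = c2 # ts2'" by (cases ts2) auto
    have "map Suc (fdep (children c1)) @ 1 # fdep ts1 = map Suc (fdep (children c2)) @ 1 # fdep ts2'"
      using Cons.prems(1) ts2 dep_split[of c1] dep_split[of c2] by simp
    then have e: "map Suc (fdep (children c1)) = map Suc (fdep (children c2))" "fdep ts1 = fdep ts2'"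
      using split1 dep_split[of c1] dep_split[of c2] by blast+
    have "dep c1 = dep c2" using e(1) by (simp add: dep_children)
    then have "c1 = c2" using Cons.prems(2) by simp
    moreover have "ts1 = ts2'" using Cons.IH[OF e(2)] Cons.prems(2) by simp
    ultimately show ?case using ts2 by simp
  qed
  then show ?case using Node.prems t2 by (simp add: dep_Node)
qed

fun rnm :: "nat option \<Rightarrow> nat list \<Rightarrow> nat list" where
  "rnm c [] = []" | "rnm c (e#es) = (e + 1 - mino c e) # rnm (Some (mino c e)) es"

lemma rev_nrm: "rev (nrm c xs) = rnm c (rev xs)"
proof (induction xs arbitrary: c rule: rev_induct)
  case (snoc x xs)
  then show ?case by (simp add: nrm_append)
qed simp

lemma rh_chunk: "length X = k \<Longrightarrow> rh (d, mn) (replicate k True) [] X = map ((+) d) (rnm mn X)"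
proof (induction X arbitrary: k mn)
  case (Cons e X)
  then show ?case using mino_le[of mn e] by (cases k) auto
qed simp

lemma rh_append: "length (filter Not w1) = length D1 \<Longrightarrow> length (filter id w1) = length E1 \<Longrightarrow>
  w2 = [] \<or> hd w2 = False \<Longrightarrow>
  rh st (w1 @ w2) (D1 @ D2) (E1 @ E2) = rh st w1 D1 E1 @ rh st' w2 D2 E2"
proof (induction w1 arbitrary: st D1 E1)
  case Nil
  then show ?case by (cases w2; cases D2) auto
next
  case (Cons b w1)
  obtain a mn where st: "st = (a, mn)" by fastforce
  show ?case
  proof (cases b)
    case True
    then obtain e E1' where "E1 = e # E1'" using Cons.prems by (cases E1) auto
    then show ?thesis using Cons True st by simp
  next
    case False
    then obtain d D1' where "D1 = d # D1'" using Cons.prems by (cases D1) auto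
    then show ?thesis using Cons False st by simp
  qed
qed

fun FR' :: "nat list \<Rightarrow> nat list \<Rightarrow> nat list \<Rightarrow> nat list" where
  "FR' (d#D) E (k#ks) = map ((+) d) (nrm None (take k E)) @ d # FR' D (drop k E) ks"
| "FR' _ _ _ = []"

lemma FR_FR': "FR D E s ks = FR' D (drop s E) ks"
proof (induction D E s ks rule: FR.induct)
  case (1 d D E s k ks)
  have a: "drop s (take (s+k) E) = take k (drop s E)" by (simp add: take_drop add.commute)
  have b: "drop (k + s) E = drop (s + k) E" by (simp add: add.commute)
  show ?case using 1 by (simp add: Bk_def a b)
qed auto

definition fw :: "nat list \<Rightarrow> bool list" where
  "fw ks = concat (map (\<lambda>k. replicate k True @ [False]) ks)"

lemma fw_Nil[simp]: "fw [] = []" and fw_Cons[simp]: "fw (k#ks) = replicate k True @ False # fw ks"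
  by (auto simp: fw_def)

lemma fw_counts: "length (filter Not (fw ks)) = length ks" "length (filter id (fw ks)) = sum_list ks"
  by (induction ks) auto

lemma FR'_rh: "length D = length ks \<Longrightarrow> length E = sum_list ks \<Longrightarrow>
  rev (FR' D E ks) = rh st (rev (fw ks)) (rev D) (rev E)"
proof (induction ks arbitrary: D E st rule: rev_induct)
  case Nil then show ?case by simp
next
  case (snoc k ks)
  obtain D' d where D: "D = D' @ [d]" using snoc.prems by (cases D rule: rev_cases) auto
  define E1 where "E1 = take (sum_list ks) E"
  define E2 where "E2 = drop (sum_list ks) E"
  have E: "E = E1 @ E2" "length E1 = sum_list ks" "length E2 = k"
    using snoc.prems by (auto simp: E1_def E2_def)
  have fr: "FR' (D' @ [d]) (E1 @ E2) (ks @ [k]) = FR' D' E1 ks @ map ((+) d) (nrm None E2) @ [d]"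
    if "length D' = length ks" "length E1 = sum_list ks" "length E2 = k" for D' E1 E2 d
    using that
  proof (induction D' E1 ks rule: FR'.induct)
    case (1 d' D E k' ks)
    then show ?case by (simp add: drop_append take_append)
  qed auto
  have "rev (FR' D E (ks @ [k])) = d # map ((+) d) (rev (nrm None E2)) @ rev (FR' D' E1 ks)"
    using fr[of D' E1 E2 d] D E snoc.prems by (simp add: rev_map)
  also have "\<dots> = rh st (False # replicate k True) [d] (rev E2) @ rh st (rev (fw ks)) (rev D') (rev E1)"
    using snoc.IH[of D' E1 st] D E snoc.prems rh_chunk[of "rev E2" k d None] by (simp add: rev_nrm)
  also have "\<dots> = rh st (rev (fw (ks @ [k]))) (rev D) (rev E)"
  proof -
    have "rev (fw (ks @ [k])) = (False # replicate k True) @ rev (fw ks)"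
      by (simp add: fw_def)
    moreover have "rev (fw ks) = [] \<or> hd (rev (fw ks)) = False"
      by (cases ks rule: rev_cases) (auto simp: fw_def)
    ultimately show ?thesis
      using rh_append[of "False # replicate k True" "[d]" "rev E2" "rev (fw ks)" st "rev D'" "rev E1" st] D E
      by simp
  qed
  finally show ?case .
qed


definition Wf :: "nat \<Rightarrow> nat \<Rightarrow> bool list set" where
  "Wf m n = {w. length (filter Not w) = m \<and> length (filter id w) = n \<and> (w \<noteq> [] \<longrightarrow> last w = False)}"

fun ck :: "nat \<Rightarrow> bool list \<Rightarrow> nat list" where
  "ck k [] = []" | "ck k (True#w) = ck (Suc k) w" | "ck k (False#w) = k # ck 0 w"

lemma ck_rep: "ck k (replicate j True @ False # w) = (k + j) # ck 0 w"
  by (induction j arbitrary: k) auto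

lemma ck_fw: "ck 0 (fw ks) = ks"
  by (induction ks) (auto simp: ck_rep)

lemma fw_ck: "(w \<noteq> [] \<longrightarrow> last w = False) \<Longrightarrow> (w = [] \<longrightarrow> k = 0) \<Longrightarrow> fw (ck k w) = replicate k True @ w"
proof (induction k w rule: ck.induct)
  case (2 k w)
  then have "w \<noteq> []" by auto
  then show ?case using 2 by (simp add: replicate_app_Cons_same)
qed (auto split: if_splits)

lemma ck_len: "length (ck k w) = length (filter Not w)"
  by (induction k w rule: ck.induct) auto

lemma ck_sum: "(w = [] \<longrightarrow> k = 0) \<Longrightarrow> (w \<noteq> [] \<longrightarrow> last w = False) \<Longrightarrow> sum_list (ck k w) = k + length (filter id w)"
proof (induction k w rule: ck.induct)
  case (2 k w)
  then have "w \<noteq> []" by auto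
  then show ?case using 2 by simp
qed (auto split: if_splits)

lemma fw_Nil_iff[simp]: "fw ks = [] \<longleftrightarrow> ks = []"
  by (cases ks) auto

lemma last_fw: "ks \<noteq> [] \<Longrightarrow> last (fw ks) = False"
  by (induction ks) (auto simp: last_append)

lemma fw_bij: "bij_betw fw (Cmp m n) (Wf m n)"
proof (rule bij_betw_byWitness[where f' = "ck 0"])
  show "\<forall>a\<in>Cmp m n. ck 0 (fw a) = a" by (simp add: ck_fw)
  show "\<forall>a'\<in>Wf m n. fw (ck 0 a') = a'" by (auto simp: Wf_def fw_ck)
  show "fw ` Cmp m n \<subseteq> Wf m n"
  proof
    fix w assume "w \<in> fw ` Cmp m n"
    then obtain ks where "ks \<in> Cmp m n" "w = fw ks" by blast
    then show "w \<in> Wf m n" using fw_counts[of ks] last_fw[of ks]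
      by (auto simp: Wf_def Cmp_def)
  qed
  show "ck 0 ` Wf m n \<subseteq> Cmp m n"
  proof
    fix ks assume "ks \<in> ck 0 ` Wf m n"
    then obtain w where "w \<in> Wf m n" "ks = ck 0 w" by blast
    then show "ks \<in> Cmp m n" using ck_len[of 0 w] ck_sum[of w 0]
      by (auto simp: Wf_def Cmp_def)
  qed
qed


definition W3f :: "nat \<Rightarrow> nat \<Rightarrow> nat \<Rightarrow> L3 list set" where
  "W3f m a b = {w. cnt T w = m \<and> cnt U w = a \<and> cnt V w = b \<and> w \<noteq> [] \<and> last w = T}"

definition gL :: "L3 list \<Rightarrow> bool list \<times> bool list" where
  "gL w = (map (\<lambda>x. x = U) (filter (\<lambda>x. x \<noteq> V) w), map (\<lambda>x. x = V) w)"
definition gR :: "L3 list \<Rightarrow> bool list \<times> bool list" where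
  "gR w = (map (\<lambda>x. x = V) (filter (\<lambda>x. x \<noteq> T) w) @ [False], map (\<lambda>x. x \<noteq> T) w)"

fun mL :: "bool list \<Rightarrow> bool list \<Rightarrow> L3 list" where
  "mL (True#w2) w1 = V # mL w2 w1"
| "mL (False#w2) (b#w1) = (if b then U else T) # mL w2 w1"
| "mL _ _ = []"

fun mR :: "bool list \<Rightarrow> bool list \<Rightarrow> L3 list" where
  "mR (False#w4) w3 = T # mR w4 w3"
| "mR (True#w4) (b#w3) = (if b then V else U) # mR w4 w3"
| "mR _ _ = []"

lemma cnts1: "length (filter Not (map (\<lambda>x. x = U) (filter (\<lambda>x. x \<noteq> V) w))) = cnt T w"
proof (induction w)
  case (Cons x w) then show ?case by (cases x) auto
qed simp
lemma cnts2: "length (filter id (map (\<lambda>x. x = U) (filter (\<lambda>x. x \<noteq> V) w))) = cnt U w"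
proof (induction w)
  case (Cons x w) then show ?case by (cases x) auto
qed simp
lemma cnts3: "length (filter Not (map (\<lambda>x. x = V) w)) = cnt T w + cnt U w"
proof (induction w)
  case (Cons x w) then show ?case by (cases x) auto
qed simp
lemma cnts4: "length (filter id (map (\<lambda>x. x = V) w)) = cnt V w"
proof (induction w)
  case (Cons x w) then show ?case by (cases x) auto
qed simp
lemma cnts5: "length (filter Not (map (\<lambda>x. x = V) (filter (\<lambda>x. x \<noteq> T) w))) = cnt U w"
proof (induction w)
  case (Cons x w) then show ?case by (cases x) auto
qed simp
lemma cnts6: "length (filter id (map (\<lambda>x. x = V) (filter (\<lambda>x. x \<noteq> T) w))) = cnt V w"
proof (induction w)
  case (Cons x w) then show ?case by (cases x) auto
qed simp
lemma cnts7: "length (filter Not (map (\<lambda>x. x \<noteq> T) w)) = cnt T w"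
proof (induction w)
  case (Cons x w) then show ?case by (cases x) auto
qed simp
lemma cnts8: "length (filter id (map (\<lambda>x. x \<noteq> T) w)) = cnt U w + cnt V w"
proof (induction w)
  case (Cons x w) then show ?case by (cases x) auto
qed simp
lemmas cnts = cnts1 cnts2 cnts3 cnts4 cnts5 cnts6 cnts7 cnts8

lemma last_filter: "xs \<noteq> [] \<Longrightarrow> P (last xs) \<Longrightarrow> last (filter P xs) = last xs \<and> filter P xs \<noteq> []"
  by (induction xs) (auto split: if_splits)

lemma mL_gL: "mL (map (\<lambda>x. x = V) w) (map (\<lambda>x. x = U) (filter (\<lambda>x. x \<noteq> V) w)) = w"
proof (induction w)
  case (Cons x w) then show ?case by (cases x) auto
qed simp

lemma gL_mL: "length (filter Not w2) = length w1 \<Longrightarrow> gL (mL w2 w1) = (w1, w2)"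
proof (induction w2 arbitrary: w1)
  case Nil then show ?case by (simp add: gL_def)
next
  case (Cons b w2)
  show ?case
  proof (cases b)
    case True then show ?thesis using Cons by (simp add: gL_def)
  next
    case False
    then obtain c w1' where "w1 = c # w1'" using Cons.prems by (cases w1) auto
    then show ?thesis using Cons False by (cases c) (auto simp: gL_def)
  qed
qed

lemma mR_gR: "mR (map (\<lambda>x. x \<noteq> T) w) (map (\<lambda>x. x = V) (filter (\<lambda>x. x \<noteq> T) w)) = w"
proof (induction w)
  case (Cons x w) then show ?case by (cases x) auto
qed simp

lemma gR_mR: "length (filter id w4) = length w3 \<Longrightarrow>
  map (\<lambda>x. x = V) (filter (\<lambda>x. x \<noteq> T) (mR w4 w3)) = w3 \<and> map (\<lambda>x. x \<noteq> T) (mR w4 w3) = w4"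
proof (induction w4 arbitrary: w3)
  case Nil then show ?case by simp
next
  case (Cons b w4)
  show ?case
  proof (cases b)
    case False then show ?thesis using Cons by simp
  next
    case True
    then obtain c w3' where "w3 = c # w3'" using Cons.prems by (cases w3) auto
    then show ?thesis using Cons True by (cases c) auto
  qed
qed

lemma len_split: "length w = length (filter Not w) + length (filter id w)"
  by (induction w) auto

lemma gL_bij: assumes m: "0 < m" shows "bij_betw gL (W3f m a b) (Wf m a \<times> Wf (m + a) b)"
proof (rule bij_betw_byWitness[where f' = "\<lambda>(w1, w2). mL w2 w1"])
  show "\<forall>w\<in>W3f m a b. (\<lambda>(w1, w2). mL w2 w1) (gL w) = w" by (simp add: gL_def mL_gL)
  show "\<forall>p\<in>Wf m a \<times> Wf (m + a) b. gL ((\<lambda>(w1, w2). mL w2 w1) p) = p"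
  proof
    fix p assume p: "p \<in> Wf m a \<times> Wf (m + a) b"
    obtain w1 w2 where pp: "p = (w1, w2)" by fastforce
    have "length (filter Not w1) = m" "length (filter id w1) = a" "length (filter Not w2) = m + a"
      using p pp by (auto simp: Wf_def)
    then have "length (filter Not w2) = length w1" using len_split[of w1] by linarith
    then show "gL ((\<lambda>(w1, w2). mL w2 w1) p) = p" using gL_mL pp by simp
  qed
  show "gL ` W3f m a b \<subseteq> Wf m a \<times> Wf (m + a) b"
  proof
    fix q assume "q \<in> gL ` W3f m a b"
    then obtain w where w: "w \<in> W3f m a b" "q = gL w" by blast
    then have ne: "w \<noteq> []" "last w = T" by (auto simp: W3f_def)
    have "last (filter (\<lambda>x. x \<noteq> V) w) = T" "filter (\<lambda>x. x \<noteq> V) w \<noteq> []"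
      using last_filter[of w "\<lambda>x. x \<noteq> V"] ne by auto
    then show "q \<in> Wf m a \<times> Wf (m + a) b" using w ne cnts[of w]
      by (auto simp: Wf_def W3f_def gL_def last_map)
  qed
  show "(\<lambda>(w1, w2). mL w2 w1) ` (Wf m a \<times> Wf (m + a) b) \<subseteq> W3f m a b"
  proof
    fix w assume "w \<in> (\<lambda>(w1, w2). mL w2 w1) ` (Wf m a \<times> Wf (m + a) b)"
    then obtain p where p: "p \<in> Wf m a \<times> Wf (m + a) b" "w = (\<lambda>(w1, w2). mL w2 w1) p" by blast
    obtain w1 w2 where "p = (w1, w2)" by fastforce
    then have ws: "w1 \<in> Wf m a" "w2 \<in> Wf (m + a) b" and wd: "w = mL w2 w1" using p by auto
    have "length (filter Not w1) = m" "length (filter id w1) = a" "length (filter Not w2) = m + a"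
      using ws by (auto simp: Wf_def)
    then have "length (filter Not w2) = length w1" using len_split[of w1] by linarith
    then have g: "gL w = (w1, w2)" using gL_mL wd by simp
    then have c: "cnt T w = m" "cnt U w = a" "cnt V w = b"
      using cnts[of w] ws by (auto simp: gL_def Wf_def)
    then have ne: "w \<noteq> []" using m by auto
    have e2: "w2 = map (\<lambda>x. x = V) w" "w1 = map (\<lambda>x. x = U) (filter (\<lambda>x. x \<noteq> V) w)"
      using g by (auto simp: gL_def)
    have "last w2 = False" using ws ne e2 by (auto simp: Wf_def)
    then have l2: "last w \<noteq> V" using e2 ne by (simp add: last_map)
    then have lf: "last (filter (\<lambda>x. x \<noteq> V) w) = last w" "filter (\<lambda>x. x \<noteq> V) w \<noteq> []"
      using last_filter[of w "\<lambda>x. x \<noteq> V"] ne by auto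
    have "last w1 = False" using ws lf e2 by (auto simp: Wf_def)
    then have "last w \<noteq> U" using e2 lf by (simp add: last_map)
    then have "last w = T" using l2 by (cases "last w") auto
    then show "w \<in> W3f m a b" using c ne by (simp add: W3f_def)
  qed
qed

lemma gR_bij: assumes m: "0 < m" shows "bij_betw gR (W3f m a b) (Wf (a + 1) b \<times> Wf m (a + b))"
proof (rule bij_betw_byWitness[where f' = "\<lambda>(w3, w4). mR w4 (butlast w3)"])
  show "\<forall>w\<in>W3f m a b. (\<lambda>(w3, w4). mR w4 (butlast w3)) (gR w) = w" by (simp add: gR_def mR_gR)
  show "\<forall>p\<in>Wf (a + 1) b \<times> Wf m (a + b). gR ((\<lambda>(w3, w4). mR w4 (butlast w3)) p) = p"
  proof
    fix p assume p: "p \<in> Wf (a + 1) b \<times> Wf m (a + b)"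
    obtain w3 w4 where pp: "p = (w3, w4)" by fastforce
    have ne: "w3 \<noteq> []" using p pp by (auto simp: Wf_def)
    then have w3: "w3 = butlast w3 @ [False]" using p pp append_butlast_last_id[of w3] by (auto simp: Wf_def)
    have "length (filter Not w3) = length (filter Not (butlast w3)) + 1" "length (filter id w3) = length (filter id (butlast w3))"
      using arg_cong[OF w3, of "\<lambda>x. length (filter Not x)"] arg_cong[OF w3, of "\<lambda>x. length (filter id x)"] by simp_all
    then have "length (filter Not (butlast w3)) = a" "length (filter id (butlast w3)) = b"
      using p pp by (auto simp: Wf_def)
    moreover have "length (filter id w4) = a + b" using p pp by (auto simp: Wf_def)
    ultimately have "length (filter id w4) = length (butlast w3)" using len_split[of "butlast w3"] by linarith
    then show "gR ((\<lambda>(w3, w4). mR w4 (butlast w3)) p) = p" using gR_mR[of w4 "butlast w3"] pp w3[symmetric] by (simp add: gR_def)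
  qed
  show "gR ` W3f m a b \<subseteq> Wf (a + 1) b \<times> Wf m (a + b)"
  proof
    fix q assume "q \<in> gR ` W3f m a b"
    then obtain w where w: "w \<in> W3f m a b" "q = gR w" by blast
    then have ne: "w \<noteq> []" "last w = T" by (auto simp: W3f_def)
    then show "q \<in> Wf (a + 1) b \<times> Wf m (a + b)" using w cnts[of w]
      by (auto simp: Wf_def W3f_def gR_def last_map)
  qed
  show "(\<lambda>(w3, w4). mR w4 (butlast w3)) ` (Wf (a + 1) b \<times> Wf m (a + b)) \<subseteq> W3f m a b"
  proof
    fix w assume "w \<in> (\<lambda>(w3, w4). mR w4 (butlast w3)) ` (Wf (a + 1) b \<times> Wf m (a + b))"
    then obtain p where p: "p \<in> Wf (a + 1) b \<times> Wf m (a + b)" "w = (\<lambda>(w3, w4). mR w4 (butlast w3)) p" by blast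
    obtain w3 w4 where "p = (w3, w4)" by fastforce
    then have ws: "w3 \<in> Wf (a + 1) b" "w4 \<in> Wf m (a + b)" and wd: "w = mR w4 (butlast w3)" using p by auto
    have ne3: "w3 \<noteq> []" using ws by (auto simp: Wf_def)
    then have w3: "w3 = butlast w3 @ [False]" using ws append_butlast_last_id[of w3] by (auto simp: Wf_def)
    have "length (filter Not w3) = length (filter Not (butlast w3)) + 1" "length (filter id w3) = length (filter id (butlast w3))"
      using arg_cong[OF w3, of "\<lambda>x. length (filter Not x)"] arg_cong[OF w3, of "\<lambda>x. length (filter id x)"] by simp_all
    then have c3: "length (filter Not (butlast w3)) = a" "length (filter id (butlast w3)) = b"
      using ws by (auto simp: Wf_def)
    moreover have "length (filter id w4) = a + b" using ws by (auto simp: Wf_def)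
    ultimately have "length (filter id w4) = length (butlast w3)" using len_split[of "butlast w3"] by linarith
    then have g: "map (\<lambda>x. x = V) (filter (\<lambda>x. x \<noteq> T) w) = butlast w3" "map (\<lambda>x. x \<noteq> T) w = w4"
      using gR_mR wd by auto
    then have c: "cnt T w = m" "cnt U w = a" "cnt V w = b"
      using cnts[of w] ws c3 by (auto simp: Wf_def)
    then have ne: "w \<noteq> []" using m by auto
    have "last w4 = False" using ws m by (auto simp: Wf_def)
    then have "last w = T" using g ne by (auto simp: last_map)
    then show "w \<in> W3f m a b" using c ne by (simp add: W3f_def)
  qed
qed


lemma finite_sorted: "finite A \<Longrightarrow> finite {xs :: nat list. sorted_wrt (<) xs \<and> set xs \<subseteq> A}"
proof -
  assume A: "finite A"
  have "inj_on set {xs :: nat list. sorted_wrt (<) xs \<and> set xs \<subseteq> A}"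
    by (rule inj_onI) (auto intro: strict_sorted_equal)
  moreover have "set ` {xs :: nat list. sorted_wrt (<) xs \<and> set xs \<subseteq> A} \<subseteq> Pow A" by auto
  ultimately show ?thesis using A by (meson finite_Pow_iff finite_imageD finite_subset)
qed

lemma finite_cuts: "finite (cuts n)"
proof -
  have "cuts n \<subseteq> {xs :: nat list. sorted_wrt (<) xs \<and> set xs \<subseteq> {0..n}}"
  proof
    fix xs assume xs: "xs \<in> cuts n"
    then have "sorted_wrt (<) xs" "xs \<noteq> []" "last xs = n" by (auto simp: cuts_def)
    then have "\<forall>x\<in>set xs. x \<le> n"
      by (metis in_set_conv_nth sorted_nth_le_last)
    then show "xs \<in> {xs :: nat list. sorted_wrt (<) xs \<and> set xs \<subseteq> {0..n}}"
      using \<open>sorted_wrt (<) xs\<close> by auto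
  qed
  then show ?thesis by (rule finite_subset) (rule finite_sorted, simp)
qed

lemma finite_incmaps: "finite (incmaps t k)"
  by (rule finite_subset[OF _ finite_sorted[of "{1..nnodes t}"]]) (auto simp: incmaps_def)

definition hk :: "tree \<Rightarrow> nat list \<Rightarrow> tree \<Rightarrow> tree" where
  "hk t ks u = hash t (fst (toCF 1 0 ks)) (snd (toCF 1 0 ks)) u"

lemma tprod_TP: "0 < deg u \<Longrightarrow> tprod t u = (\<Sum>ks\<in>Cmp (nnodes t) (deg u). Poly_Mapping.single (hk t ks u) 1)"
proof -
  assume n: "0 < deg u"
  have "tprod t u = (\<Sum>cs\<in>cuts (deg u). \<Sum>fs\<in>incmaps t (length cs). Poly_Mapping.single (hash t cs fs u) 1)"
    using n by (simp add: tprod_def)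
  also have "\<dots> = (\<Sum>p\<in>Sigma (cuts (deg u)) (\<lambda>cs. incmaps t (length cs)). Poly_Mapping.single (hash t (fst p) (snd p) u) 1)"
    by (subst sum.Sigma) (auto simp: finite_cuts finite_incmaps split_beta)
  also have "\<dots> = (\<Sum>ks\<in>Cmp (nnodes t) (deg u). Poly_Mapping.single (hk t ks u) 1)"
    by (simp add: hk_def sum.reindex_bij_betw[OF toCF_bij[OF n, of t], symmetric])
  finally show ?thesis .
qed

lemma length_FR': "length D = length ks \<Longrightarrow> length E = sum_list ks \<Longrightarrow> length (FR' D E ks) = length D + sum_list ks"
  by (induction D E ks rule: FR'.induct) auto

lemma dep_hk: assumes ks: "ks \<in> Cmp (nnodes t) (deg u)" and n: "0 < deg u"
  shows "rev (dep (hk t ks u)) = rh s (rev (fw ks)) (rev (dep t)) (rev (fdep (children u)))"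
    and "nnodes (hk t ks u) = nnodes t + deg u"
proof -
  have d: "dep (hk t ks u) = FR' (dep t) (fdep (children u)) ks"
    using hash_dep[OF ks n, of "fst (toCF 1 0 ks)" "snd (toCF 1 0 ks)"] by (simp add: hk_def FR_FR')
  have l: "length (dep t) = length ks" "length (fdep (children u)) = sum_list ks"
    using ks by (auto simp: Cmp_def length_dep deg_len)
  show "rev (dep (hk t ks u)) = rh s (rev (fw ks)) (rev (dep t)) (rev (fdep (children u)))"
    using FR'_rh[OF l] d by simp
  show "nnodes (hk t ks u) = nnodes t + deg u"
    using length_FR'[OF l] d length_dep[of "hk t ks u"] length_dep[of t] ks by (simp add: Cmp_def)
qed


lemma vl_append: "vl a (xs @ ys) = (vl a xs \<and> vl (last (a # xs)) ys)"
  by (induction xs arbitrary: a) auto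

lemma vl_Suc: "vl (Suc a) (map Suc xs) = vl a xs"
  by (induction xs arbitrary: a) auto

lemma vl_dep: "vl a (rev (dep t))"
proof (induction t arbitrary: a)
  case (Node ts)
  have "vl b (rev (fdep ts))" for b
    using Node.IH
  proof (induction ts arbitrary: b)
    case (Cons c ts)
    obtain Z where Z: "rev (dep c) = 0 # Z" by (simp add: dep_children)
    have "vl 0 Z" using Cons.prems[of c 0] Z by simp
    then have "vl x (map Suc (rev (dep c)))" for x using Z vl_Suc[of 0 Z] by simp
    then show ?case using Cons by (simp add: vl_append rev_map)
  qed simp
  then show ?case by (simp add: dep_Node)
qed

lemma vl_E: "vl 0 (rev (fdep (children u)))"
  using vl_dep[of 0 u] by (simp add: dep_children)

lemma sumW: "(\<Sum>ks\<in>Cmp a b. G ks) = (\<Sum>w\<in>Wf a b. G (ck 0 w))"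
  using sum.reindex_bij_betw[OF fw_bij[of a b], of "\<lambda>w. G (ck 0 w)"] by (simp add: ck_fw)

lemma Wf_Cmp: "w \<in> Wf a b \<Longrightarrow> ck 0 w \<in> Cmp a b \<and> fw (ck 0 w) = w"
  using ck_len[of 0 w] ck_sum[of w 0] fw_ck[of w 0] by (auto simp: Wf_def Cmp_def)

lemma nnodes_deg: "nnodes u = deg u + 1"
  using nnodes_pos[of u] by (simp add: deg_def)

lemma cnt_rev: "cnt x (rev w) = cnt x w"
  by (simp add: rev_filter[symmetric])

lemma TE:
  assumes w: "w \<in> W3f (nnodes t) (deg u) (deg v)" and nu: "0 < deg u" and nv: "0 < deg v"
  shows "hk (hk t (ck 0 (fst (gL w))) u) (ck 0 (snd (gL w))) v = hk t (ck 0 (snd (gR w))) (hk u (ck 0 (fst (gR w))) v)"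
proof -
  define m where "m = nnodes t"
  have m: "0 < m" by (simp add: m_def nnodes_pos)
  obtain W1 W2 where g1: "gL w = (W1, W2)" by fastforce
  obtain W3 W4 where g2: "gR w = (W3, W4)" by fastforce
  have WL: "W1 \<in> Wf m (deg u)" "W2 \<in> Wf (m + deg u) (deg v)"
    using bij_betw_apply[OF gL_bij[OF m] w[folded m_def]] g1 by auto
  have WR: "W3 \<in> Wf (deg u + 1) (deg v)" "W4 \<in> Wf m (deg u + deg v)"
    using bij_betw_apply[OF gR_bij[OF m] w[folded m_def]] g2 by auto
  define ks1 where "ks1 = ck 0 W1"
  define ks2 where "ks2 = ck 0 W2"
  define ks3 where "ks3 = ck 0 W3"
  define ks4 where "ks4 = ck 0 W4"
  have k1: "ks1 \<in> Cmp (nnodes t) (deg u)" "fw ks1 = W1" using Wf_Cmp[OF WL(1)] by (auto simp: ks1_def m_def)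
  define t1 where "t1 = hk t ks1 u"
  have t1: "rev (dep t1) = rh (0, None) (rev W1) (rev (dep t)) (rev (fdep (children u)))" "nnodes t1 = m + deg u"
    using dep_hk[OF k1(1) nu] k1(2) by (auto simp: t1_def m_def)
  have k2: "ks2 \<in> Cmp (nnodes t1) (deg v)" "fw ks2 = W2" using Wf_Cmp[OF WL(2)] t1(2) by (auto simp: ks2_def)
  define t2 where "t2 = hk t1 ks2 v"
  have t2: "rev (dep t2) = rh (0, None) (rev W2) (rev (dep t1)) (rev (fdep (children v)))"
    using dep_hk[OF k2(1) nv] k2(2) by (auto simp: t2_def)
  have k3: "ks3 \<in> Cmp (nnodes u) (deg v)" "fw ks3 = W3" using Wf_Cmp[OF WR(1)] by (auto simp: ks3_def nnodes_deg)
  define t3 where "t3 = hk u ks3 v"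
  have t3: "rev (dep t3) = rh (0, None) (rev W3) (rev (dep u)) (rev (fdep (children v)))" "nnodes t3 = nnodes u + deg v"
    using dep_hk[OF k3(1) nv] k3(2) by (auto simp: t3_def)
  have dt3: "deg t3 = deg u + deg v" using t3(2) nnodes_deg[of u] nnodes_deg[of t3] by simp
  have k4: "ks4 \<in> Cmp (nnodes t) (deg t3)" "fw ks4 = W4" using Wf_Cmp[OF WR(2)] dt3 by (auto simp: ks4_def m_def)
  have nt3: "0 < deg t3" using dt3 nu by simp
  define t4 where "t4 = hk t ks4 t3"
  have t4: "rev (dep t4) = rh (0, None) (rev W4) (rev (dep t)) (rev (fdep (children t3)))"
    using dep_hk[OF k4(1) nt3] k4(2) by (auto simp: t4_def)
  define rE where "rE = rev (fdep (children u))"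
  define rF where "rF = rev (fdep (children v))"
  obtain rD' where rD: "rev (dep t) = 0 # rD'" by (simp add: dep_children)
  have wne: "w \<noteq> []" "last w = T" using w by (auto simp: W3f_def)
  define r' where "r' = rev (butlast w)"
  have r: "rev w = T # r'" using wne append_butlast_last_id[of w] unfolding r'_def
    by (metis rev.simps(2) rev_rev_ident)
  have cw: "cnt T w = m" "cnt U w = deg u" "cnt V w = deg v" using w by (auto simp: W3f_def m_def)
  have cr: "cnt T r' + 1 = m" "cnt U r' = deg u" "cnt V r' = deg v"
    using cnt_rev[of T w] cnt_rev[of U w] cnt_rev[of V w] cw r by simp_all
  have lD: "length rD' = cnt T r'" using arg_cong[OF rD, of length] length_dep[of t] cr by (simp add: m_def)
  have lE: "length rE = cnt U r'" using cr by (simp add: rE_def deg_len)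
  have lF: "length rF = cnt V r'" using cr by (simp add: rF_def deg_len)
  have W1: "rev W1 = False # map (\<lambda>x. x = U) (filter (\<lambda>x. x \<noteq> V) r')"
    using g1 r by (simp add: gL_def rev_map rev_filter[symmetric])
  have W2: "rev W2 = False # map (\<lambda>x. x = V) r'"
    using g1 r by (simp add: gL_def rev_map)
  have W3: "rev W3 = False # map (\<lambda>x. x = V) (filter (\<lambda>x. x \<noteq> T) r')"
    using g2 r by (simp add: gR_def rev_map rev_filter[symmetric])
  have W4: "rev W4 = False # map (\<lambda>x. x \<noteq> T) r'"
    using g2 r by (simp add: gR_def rev_map)
  have e3: "rev (fdep (children t3)) = rh (0, None) (map (\<lambda>x. x = V) (filter (\<lambda>x. x \<noteq> T) r')) rE rF"
  proof -
    have "rev (dep t3) = 0 # rh (0, None) (map (\<lambda>x. x = V) (filter (\<lambda>x. x \<noteq> T) r')) rE rF"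
      using t3(1) W3 by (simp add: dep_children[of u] rE_def rF_def)
    then show ?thesis by (simp add: dep_children[of t3])
  qed
  have inv: "INV (0, None) (0, None) (0, None) (0, None)" by (simp add: INV_def)
  have "rev (dep t2) = rev (dep t4)"
    using t2 t1(1) t4 e3 rD W1 W2 W4 lock[OF inv _ lD lE lF] vl_E[of u]
    by (simp add: rE_def rF_def)
  then have "dep t2 = dep t4" by simp
  then show ?thesis using g1 g2 dep_inj by (simp add: t2_def t1_def t4_def t3_def ks1_def ks2_def ks3_def ks4_def)
qed


lemma BI:
  assumes nu: "0 < deg u" and nv: "0 < deg v"
  shows "(\<Sum>ks1\<in>Cmp (nnodes t) (deg u). tprod (hk t ks1 u) v :: tree \<Rightarrow>\<^sub>0 'k::field)
       = (\<Sum>ks3\<in>Cmp (nnodes u) (deg v). tprod t (hk u ks3 v))"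
proof -
  define m where "m = nnodes t"
  have m: "0 < m" by (simp add: m_def nnodes_pos)
  let ?S = "\<lambda>x. Poly_Mapping.single x (1::'k)"
  have "(\<Sum>ks1\<in>Cmp m (deg u). tprod (hk t ks1 u) v)
      = (\<Sum>ks1\<in>Cmp m (deg u). \<Sum>ks2\<in>Cmp (m + deg u) (deg v). ?S (hk (hk t ks1 u) ks2 v))"
    by (rule sum.cong) (auto simp: tprod_TP[OF nv] dep_hk(2)[OF _ nu] m_def)
  also have "\<dots> = (\<Sum>w1\<in>Wf m (deg u). \<Sum>w2\<in>Wf (m + deg u) (deg v). ?S (hk (hk t (ck 0 w1) u) (ck 0 w2) v))"
    by (simp add: sumW)
  also have "\<dots> = (\<Sum>p\<in>Wf m (deg u) \<times> Wf (m + deg u) (deg v). ?S (hk (hk t (ck 0 (fst p)) u) (ck 0 (snd p)) v))"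
    by (simp add: sum.cartesian_product split_beta)
  also have "\<dots> = (\<Sum>w\<in>W3f m (deg u) (deg v). ?S (hk (hk t (ck 0 (fst (gL w))) u) (ck 0 (snd (gL w))) v))"
    by (rule sum.reindex_bij_betw[OF gL_bij[OF m], symmetric])
  also have "\<dots> = (\<Sum>w\<in>W3f m (deg u) (deg v). ?S (hk t (ck 0 (snd (gR w))) (hk u (ck 0 (fst (gR w))) v)))"
    by (rule sum.cong) (auto simp: TE[OF _ nu nv] m_def)
  also have "\<dots> = (\<Sum>p\<in>Wf (deg u + 1) (deg v) \<times> Wf m (deg u + deg v). ?S (hk t (ck 0 (snd p)) (hk u (ck 0 (fst p)) v)))"
    by (rule sum.reindex_bij_betw[OF gR_bij[OF m]])
  also have "\<dots> = (\<Sum>w3\<in>Wf (deg u + 1) (deg v). \<Sum>w4\<in>Wf m (deg u + deg v). ?S (hk t (ck 0 w4) (hk u (ck 0 w3) v)))"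
    by (simp add: sum.cartesian_product split_beta)
  also have "\<dots> = (\<Sum>ks3\<in>Cmp (deg u + 1) (deg v). \<Sum>ks4\<in>Cmp m (deg u + deg v). ?S (hk t ks4 (hk u ks3 v)))"
    by (simp add: sumW)
  also have "\<dots> = (\<Sum>ks3\<in>Cmp (nnodes u) (deg v). tprod t (hk u ks3 v))"
  proof (rule sum.cong)
    fix ks3 assume k': "ks3 \<in> Cmp (nnodes u) (deg v)"
    have d: "deg (hk u ks3 v) = deg u + deg v"
      using dep_hk(2)[OF k' nv] nnodes_deg[of u] nnodes_deg[of "hk u ks3 v"] by simp
    have nt: "0 < deg (hk u ks3 v)" using d nu by simp
    show "(\<Sum>ks4\<in>Cmp m (deg u + deg v). ?S (hk t ks4 (hk u ks3 v))) = tprod t (hk u ks3 v)"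
      by (simp add: tprod_TP[OF nt] d m_def)
  qed (simp add: nnodes_deg)
  finally show ?thesis by (simp add: m_def)
qed

lemma tprod_odot_left: "tprod odot v = (Poly_Mapping.single v 1 :: tree \<Rightarrow>\<^sub>0 'k::field)"
proof (cases "deg v = 0")
  case True
  obtain x where vx: "v = Node x" by (cases v) auto
  have "sum_list (map nnodes x) = 0" using True vx by (simp add: deg_def)
  then have "x = []" using nnodes_pos[of "hd x"] by (cases x) auto
  then have "v = odot" using vx by (simp add: odot_def)
  then show ?thesis by (simp add: tprod_def deg_def odot_def)
next
  case False
  then have nv: "0 < deg v" by simp
  have no: "nnodes odot = 1" by (simp add: odot_def)
  have C: "Cmp (nnodes odot) (deg v) = {[deg v]}"
    by (auto simp: Cmp_def length_Suc_conv no)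
  have "hk odot [deg v] v = v"
  proof (rule dep_inj)
    have k: "[deg v] \<in> Cmp (nnodes odot) (deg v)" by (simp add: Cmp_def no)
    have "rev (dep (hk odot [deg v] v)) = rh (0, None) (rev (fw [deg v])) (rev (dep odot)) (rev (fdep (children v)))"
      by (rule dep_hk(1)[OF k nv])
    also have "\<dots> = 0 # map ((+) 0) (rnm None (rev (fdep (children v))))"
      using rh_chunk[of "rev (fdep (children v))" "deg v" 0 None] by (simp add: odot_def dep_Node deg_len)
    also have "\<dots> = 0 # rev (nrm None (fdep (children v)))" by (simp add: rev_nrm)
    also have "\<dots> = rev (dep v)"
    proof -
      have "fdep (children v) \<noteq> []" using nv by (simp add: deg_len)
      moreover have "\<forall>x\<in>set (fdep (children v)). 1 \<le> x" using fdep_ge1 by blast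
      moreover have "last (fdep (children v)) = 1" using last_fdep \<open>fdep (children v) \<noteq> []\<close> by blast
      ultimately have "nrm None (fdep (children v)) = fdep (children v)"
        by (intro nrm_forest) auto
      then show ?thesis by (simp add: dep_children[of v])
    qed
    finally show "dep (hk odot [deg v] v) = dep v" by simp
  qed
  then show ?thesis by (simp only: tprod_TP[OF nv] C) simp
qed


definition sm :: "'k::field \<Rightarrow> (tree \<Rightarrow>\<^sub>0 'k) \<Rightarrow> (tree \<Rightarrow>\<^sub>0 'k)" where
  "sm a p = Poly_Mapping.map (\<lambda>c. a * c) p"

lemma lookup_sm[simp]: "Poly_Mapping.lookup (sm a p) k = a * Poly_Mapping.lookup p k"
  by (simp add: sm_def map.rep_eq when_def)

lemma hm_lookup: "Poly_Mapping.lookup (hmult x y) w = (\<Sum>t\<in>Poly_Mapping.keys x. \<Sum>u\<in>Poly_Mapping.keys y. Poly_Mapping.lookup x t * Poly_Mapping.lookup y u * Poly_Mapping.lookup (tprod t u) w)"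
  by (simp add: hmult_def lookup_sum lookup_sm[unfolded sm_def])

lemma hm_lookup_sup:
  assumes "finite A" "Poly_Mapping.keys x \<subseteq> A" "finite B" "Poly_Mapping.keys y \<subseteq> B"
  shows "Poly_Mapping.lookup (hmult x y) w = (\<Sum>t\<in>A. \<Sum>u\<in>B. Poly_Mapping.lookup x t * Poly_Mapping.lookup y u * Poly_Mapping.lookup (tprod t u) w)"
proof -
  have "Poly_Mapping.lookup (hmult x y) w = (\<Sum>t\<in>A. \<Sum>u\<in>Poly_Mapping.keys y. Poly_Mapping.lookup x t * Poly_Mapping.lookup y u * Poly_Mapping.lookup (tprod t u) w)"
    unfolding hm_lookup
    by (rule sum.mono_neutral_left) (use assms in \<open>auto simp: in_keys_iff\<close>)
  also have "\<dots> = (\<Sum>t\<in>A. \<Sum>u\<in>B. Poly_Mapping.lookup x t * Poly_Mapping.lookup y u * Poly_Mapping.lookup (tprod t u) w)"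
    by (rule sum.cong[OF refl], rule sum.mono_neutral_left) (use assms in \<open>auto simp: in_keys_iff\<close>)
  finally show ?thesis .
qed

lemma keys_add_sub: "Poly_Mapping.keys (p + q) \<subseteq> Poly_Mapping.keys p \<union> Poly_Mapping.keys q"
  by (simp add: Poly_Mapping.keys_add)

lemma hm_add1: "hmult (p + q) y = hmult p y + hmult q y"
proof (rule poly_mapping_eqI)
  fix w
  let ?A = "Poly_Mapping.keys p \<union> Poly_Mapping.keys q"
  have "Poly_Mapping.lookup (hmult (p + q) y) w = (\<Sum>t\<in>?A. \<Sum>u\<in>Poly_Mapping.keys y. Poly_Mapping.lookup (p + q) t * Poly_Mapping.lookup y u * Poly_Mapping.lookup (tprod t u) w)"
    by (rule hm_lookup_sup) (auto dest: keys_add_sub[THEN subsetD])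
  also have "\<dots> = (\<Sum>t\<in>?A. \<Sum>u\<in>Poly_Mapping.keys y. Poly_Mapping.lookup p t * Poly_Mapping.lookup y u * Poly_Mapping.lookup (tprod t u) w)
      + (\<Sum>t\<in>?A. \<Sum>u\<in>Poly_Mapping.keys y. Poly_Mapping.lookup q t * Poly_Mapping.lookup y u * Poly_Mapping.lookup (tprod t u) w)"
    by (simp add: lookup_add algebra_simps sum.distrib)
  also have "\<dots> = Poly_Mapping.lookup (hmult p y) w + Poly_Mapping.lookup (hmult q y) w"
    by (simp add: hm_lookup_sup[of ?A p "Poly_Mapping.keys y" y] hm_lookup_sup[of ?A q "Poly_Mapping.keys y" y])
  finally show "Poly_Mapping.lookup (hmult (p + q) y) w = Poly_Mapping.lookup (hmult p y + hmult q y) w" by (simp add: lookup_add)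
qed

lemma hm_add2: "hmult x (p + q) = hmult x p + hmult x q"
proof (rule poly_mapping_eqI)
  fix w
  let ?B = "Poly_Mapping.keys p \<union> Poly_Mapping.keys q"
  have "Poly_Mapping.lookup (hmult x (p + q)) w = (\<Sum>t\<in>Poly_Mapping.keys x. \<Sum>u\<in>?B. Poly_Mapping.lookup x t * Poly_Mapping.lookup (p + q) u * Poly_Mapping.lookup (tprod t u) w)"
    by (rule hm_lookup_sup) (auto dest: keys_add_sub[THEN subsetD])
  also have "\<dots> = (\<Sum>t\<in>Poly_Mapping.keys x. \<Sum>u\<in>?B. Poly_Mapping.lookup x t * Poly_Mapping.lookup p u * Poly_Mapping.lookup (tprod t u) w)
      + (\<Sum>t\<in>Poly_Mapping.keys x. \<Sum>u\<in>?B. Poly_Mapping.lookup x t * Poly_Mapping.lookup q u * Poly_Mapping.lookup (tprod t u) w)"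
    by (simp add: lookup_add algebra_simps sum.distrib)
  also have "\<dots> = Poly_Mapping.lookup (hmult x p) w + Poly_Mapping.lookup (hmult x q) w"
    by (simp add: hm_lookup_sup[of "Poly_Mapping.keys x" x ?B p] hm_lookup_sup[of "Poly_Mapping.keys x" x ?B q])
  finally show "Poly_Mapping.lookup (hmult x (p + q)) w = Poly_Mapping.lookup (hmult x p + hmult x q) w" by (simp add: lookup_add)
qed

lemma hm_zero1[simp]: "hmult 0 y = 0" by (simp add: hmult_def)
lemma hm_zero2[simp]: "hmult x 0 = 0" by (simp add: hmult_def)

lemma keys_sm: "Poly_Mapping.keys (sm a p) \<subseteq> Poly_Mapping.keys p"
  by (auto simp: in_keys_iff)

lemma hm_sm1: "hmult (sm a p) y = sm a (hmult p y)"
proof (rule poly_mapping_eqI)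
  fix w
  have "Poly_Mapping.lookup (hmult (sm a p) y) w = (\<Sum>t\<in>Poly_Mapping.keys p. \<Sum>u\<in>Poly_Mapping.keys y. Poly_Mapping.lookup (sm a p) t * Poly_Mapping.lookup y u * Poly_Mapping.lookup (tprod t u) w)"
    by (rule hm_lookup_sup) (auto dest: keys_sm[THEN subsetD])
  also have "\<dots> = a * Poly_Mapping.lookup (hmult p y) w"
    by (simp add: hm_lookup sum_distrib_left algebra_simps)
  finally show "Poly_Mapping.lookup (hmult (sm a p) y) w = Poly_Mapping.lookup (sm a (hmult p y)) w" by simp
qed

lemma hm_sm2: "hmult x (sm a p) = sm a (hmult x p)"
proof (rule poly_mapping_eqI)
  fix w
  have "Poly_Mapping.lookup (hmult x (sm a p)) w = (\<Sum>t\<in>Poly_Mapping.keys x. \<Sum>u\<in>Poly_Mapping.keys p. Poly_Mapping.lookup x t * Poly_Mapping.lookup (sm a p) u * Poly_Mapping.lookup (tprod t u) w)"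
    by (rule hm_lookup_sup) (auto dest: keys_sm[THEN subsetD])
  also have "\<dots> = a * Poly_Mapping.lookup (hmult x p) w"
    by (simp add: hm_lookup sum_distrib_left algebra_simps)
  finally show "Poly_Mapping.lookup (hmult x (sm a p)) w = Poly_Mapping.lookup (sm a (hmult x p)) w" by simp
qed

lemma hm_sum1: "hmult (\<Sum>i\<in>I. f i) y = (\<Sum>i\<in>I. hmult (f i) y)"
  by (induction I rule: infinite_finite_induct) (auto simp: hm_add1)

lemma hm_sum2: "hmult x (\<Sum>i\<in>I. f i) = (\<Sum>i\<in>I. hmult x (f i))"
  by (induction I rule: infinite_finite_induct) (auto simp: hm_add2)

lemma sm_sm: "sm a (sm b p) = sm (a * b) p"
  by (rule poly_mapping_eqI) (simp add: mult.assoc)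

lemma sm_sum: "sm a (\<Sum>i\<in>I. f i) = (\<Sum>i\<in>I. sm a (f i))"
  by (rule poly_mapping_eqI) (simp add: lookup_sum sum_distrib_left)

lemma hm_single: "hmult (Poly_Mapping.single t 1) (Poly_Mapping.single u 1) = tprod t u"
  by (rule poly_mapping_eqI) (simp add: hm_lookup)

lemma decomp: "x = (\<Sum>t\<in>Poly_Mapping.keys x. sm (Poly_Mapping.lookup x t) (Poly_Mapping.single t 1))"
proof (rule poly_mapping_eqI)
  fix k
  have "(\<Sum>t\<in>Poly_Mapping.keys x. Poly_Mapping.lookup x t * (1 when t = k)) = Poly_Mapping.lookup x k"
    by (cases "k \<in> Poly_Mapping.keys x") (auto simp: when_def in_keys_iff if_distrib cong: if_cong)
  then show "Poly_Mapping.lookup x k = Poly_Mapping.lookup (\<Sum>t\<in>Poly_Mapping.keys x. sm (Poly_Mapping.lookup x t) (Poly_Mapping.single t 1)) k"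
    by (simp add: lookup_sum lookup_single)
qed


lemma finite_Cmp: "finite (Cmp m n)"
proof -
  have "Cmp m n \<subseteq> {ks. set ks \<subseteq> {0..n} \<and> length ks = m}"
    by (auto simp: Cmp_def member_le_sum_list)
  then show ?thesis by (rule finite_subset) (rule finite_lists_length_eq, simp)
qed

lemma deg0_odot: "deg v = 0 \<Longrightarrow> v = odot"
proof -
  assume "deg v = 0"
  obtain x where vx: "v = Node x" by (cases v) auto
  have "sum_list (map nnodes x) = 0" using \<open>deg v = 0\<close> vx by (simp add: deg_def)
  then have "x = []" using nnodes_pos[of "hd x"] by (cases x) auto
  then show "v = odot" using vx by (simp add: odot_def)
qed

lemma deg_odot[simp]: "deg odot = 0" by (simp add: odot_def deg_def)

lemma tprod_odot_right: "tprod t odot = Poly_Mapping.single t 1"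
  by (simp add: tprod_def)

lemma keys_single1: "Poly_Mapping.keys (Poly_Mapping.single t (1::'k::field)) = {t}"
  by simp

lemma unit_right: "hmult x (Poly_Mapping.single odot 1) = (x :: tree \<Rightarrow>\<^sub>0 'k::field)"
proof (rule poly_mapping_eqI)
  fix k
  have "(\<Sum>t\<in>Poly_Mapping.keys x. Poly_Mapping.lookup x t * (1 when t = k)) = Poly_Mapping.lookup x k"
    by (cases "k \<in> Poly_Mapping.keys x") (auto simp: when_def in_keys_iff if_distrib cong: if_cong)
  then show "Poly_Mapping.lookup (hmult x (Poly_Mapping.single odot 1)) k = Poly_Mapping.lookup x k"
    by (simp add: hm_lookup tprod_odot_right lookup_single)
qed

lemma unit_left: "hmult (Poly_Mapping.single odot 1) x = (x :: tree \<Rightarrow>\<^sub>0 'k::field)"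
proof (rule poly_mapping_eqI)
  fix k
  have "(\<Sum>t\<in>Poly_Mapping.keys x. Poly_Mapping.lookup x t * (1 when t = k)) = Poly_Mapping.lookup x k"
    by (cases "k \<in> Poly_Mapping.keys x") (auto simp: when_def in_keys_iff if_distrib cong: if_cong)
  then show "Poly_Mapping.lookup (hmult (Poly_Mapping.single odot 1) x) k = Poly_Mapping.lookup x k"
    by (simp add: hm_lookup tprod_odot_left lookup_single)
qed

lemma basis: "hmult (tprod t u) (Poly_Mapping.single v 1) = (hmult (Poly_Mapping.single t 1) (tprod u v) :: tree \<Rightarrow>\<^sub>0 'k::field)"
proof (cases "deg u = 0")
  case True
  then have "u = odot" by (rule deg0_odot)
  then show ?thesis by (simp add: tprod_odot_right tprod_odot_left hm_single)
next
  case nu: False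
  show ?thesis
  proof (cases "deg v = 0")
    case True
    then have "v = odot" by (rule deg0_odot)
    then show ?thesis by (simp add: tprod_odot_right unit_right hm_single)
  next
    case nv: False
    have "hmult (tprod t u) (Poly_Mapping.single v 1) = (\<Sum>ks1\<in>Cmp (nnodes t) (deg u). tprod (hk t ks1 u) v :: tree \<Rightarrow>\<^sub>0 'k)"
      using nu by (simp add: tprod_TP hm_sum1 hm_single)
    also have "\<dots> = (\<Sum>ks3\<in>Cmp (nnodes u) (deg v). tprod t (hk u ks3 v))"
      using BI nu nv by simp
    also have "\<dots> = hmult (Poly_Mapping.single t 1) (tprod u v)"
      using nv by (simp add: tprod_TP hm_sum2 hm_single)
    finally show ?thesis .
  qed
qed

lemma hm_expand: "hmult x y = (\<Sum>t\<in>Poly_Mapping.keys x. \<Sum>u\<in>Poly_Mapping.keys y. sm (Poly_Mapping.lookup x t * Poly_Mapping.lookup y u) (tprod t u))"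
  by (simp add: hmult_def sm_def)

lemma hm_right: "hmult P z = (\<Sum>v\<in>Poly_Mapping.keys z. sm (Poly_Mapping.lookup z v) (hmult P (Poly_Mapping.single v 1)))"
proof -
  have "hmult P z = hmult P (\<Sum>v\<in>Poly_Mapping.keys z. sm (Poly_Mapping.lookup z v) (Poly_Mapping.single v 1))"
    by (subst decomp[of z]) (rule refl)
  then show ?thesis by (simp add: hm_sum2 hm_sm2)
qed

lemma hm_left: "hmult x Q = (\<Sum>t\<in>Poly_Mapping.keys x. sm (Poly_Mapping.lookup x t) (hmult (Poly_Mapping.single t 1) Q))"
proof -
  have "hmult x Q = hmult (\<Sum>t\<in>Poly_Mapping.keys x. sm (Poly_Mapping.lookup x t) (Poly_Mapping.single t 1)) Q"
    by (subst decomp[of x]) (rule refl)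
  then show ?thesis by (simp add: hm_sum1 hm_sm1)
qed

lemma assoc: "hmult (hmult x y) z = hmult x (hmult y z :: tree \<Rightarrow>\<^sub>0 'k::field)"
proof -
  let ?K = Poly_Mapping.keys and ?l = Poly_Mapping.lookup and ?S = "\<lambda>v. Poly_Mapping.single v (1::'k)"
  have "hmult (hmult x y) z = (\<Sum>t\<in>?K x. \<Sum>u\<in>?K y. sm (?l x t * ?l y u) (hmult (tprod t u) z))"
    by (simp add: hm_expand[of x y] hm_sum1 hm_sm1)
  also have "\<dots> = (\<Sum>t\<in>?K x. \<Sum>u\<in>?K y. \<Sum>v\<in>?K z. sm (?l x t * ?l y u * ?l z v) (hmult (tprod t u) (?S v)))"
    by (simp add: hm_right[of "tprod _ _" z] sm_sum sm_sm)
  also have "\<dots> = (\<Sum>t\<in>?K x. \<Sum>u\<in>?K y. \<Sum>v\<in>?K z. sm (?l x t * ?l y u * ?l z v) (hmult (?S t) (tprod u v)))"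
    by (simp add: basis)
  also have "\<dots> = (\<Sum>t\<in>?K x. sm (?l x t) (\<Sum>u\<in>?K y. \<Sum>v\<in>?K z. sm (?l y u * ?l z v) (hmult (?S t) (tprod u v))))"
    by (simp add: sm_sum sm_sm mult.assoc)
  also have "\<dots> = (\<Sum>t\<in>?K x. sm (?l x t) (hmult (?S t) (hmult y z)))"
    by (simp add: hm_expand[of y z] hm_sum2 hm_sm2)
  also have "\<dots> = hmult x (hmult y z)"
    by (rule hm_left[symmetric])
  finally show ?thesis .
qed

theorem proposition3p5:
  fixes x y z :: "tree \<Rightarrow>\<^sub>0 'k::field"
  shows "hmult (hmult x y) z = hmult x (hmult y z)
         \<and> hmult (Poly_Mapping.single odot 1) x = x
         \<and> hmult x (Poly_Mapping.single odot 1) = x"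
  using assoc unit_left unit_right by blast


end
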